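(* Let $\mathfrak C$ be a monster model of a complete theory $T$. Let $\pi_1(\bar x,\bar y),\dots,\pi_n(\bar x,\bar y)$ be partial types without parameters, with $\bar x,\bar y$ short tuples of variables of the same length and sorts, let $\bar a$ be a tuple from $\mathfrak C$ corresponding to $\bar x$ (and $\bar y$), and let $\epsilon_1,\dots,\epsilon_n\in\{-1,1\}$. (i) $A_{\pi_1,\bar a}^{\epsilon_1}\cdots A_{\pi_n,\bar a}^{\epsilon_n}=\bigcap\{A_{\varphi_1,\bar a}^{\epsilon_1}\cdots A_{\varphi_n,\bar a}^{\epsilon_n}:\varphi_i(\bar x,\bar y)\text{ formulas with }\pi_1\vdash\varphi_1,\dots,\pi_n\vdash\varphi_n\}$. (ii) If $A_{\pi_1,\bar a}^{\epsilon_1}\cdots A_{\pi_n,\bar a}^{\epsilon_n}$ is contained in a relatively definable subset $A$ of $\mathrm{Aut}(\mathfrak C)$, then there are formulas $\varphi_i(\bar x,\bar y)$ implied by $\pi_i(\bar x,\bar y)$, $i=1,\dots,n$, such that $A_{\varphi_1,\bar a}^{\epsilon_1}\cdots A_{\varphi_n,\bar a}^{\epsilon_n}\subseteq A$.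
   Context: $\mathfrak C$ is $\kappa$-saturated and strongly $\kappa$-homogeneous ($\kappa$ large); short means of length $<\kappa$. For a partial type (or formula) $\pi(\bar x,\bar y)$ without parameters and a tuple $\bar a$ from $\mathfrak C$, $A_{\pi,\bar a}=\{\sigma\in\mathrm{Aut}(\mathfrak C):\mathfrak C\models\pi(\sigma(\bar a),\bar a)\}$. A relatively definable subset of $\mathrm{Aut}(\mathfrak C)$ is one of the form $\{\sigma\in\mathrm{Aut}(\mathfrak C):\mathfrak C\models\psi(\sigma(\bar d),\bar e)\}$ for a formula $\psi$ without parameters and tuples $\bar d,\bar e$ from $\mathfrak C$. $X^{1}=X$ and $X^{-1}=\{\sigma^{-1}:\sigma\in X\}$; products are taken in the group. *)

theory Defs
  imports Main "HOL-Library.Equipollence"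
begin

datatype ('f,'v) trm = Var 'v | App 'f "('f,'v) trm list"

datatype ('f,'r,'v) fm =
    FEq "('f,'v) trm" "('f,'v) trm"
  | FRel 'r "('f,'v) trm list"
  | FNeg "('f,'r,'v) fm"
  | FConj "('f,'r,'v) fm" "('f,'r,'v) fm"
  | FEx 'v "('f,'r,'v) fm"

record ('s,'f,'r,'v) lang =
  fsig :: "'f \<Rightarrow> 's list \<times> 's"
  rsig :: "'r \<Rightarrow> 's list"
  vsort :: "'v \<Rightarrow> 's"

inductive wt :: "('s,'f,'r,'v) lang \<Rightarrow> ('f,'v) trm \<Rightarrow> 's \<Rightarrow> bool" for L where
  "vsort L z = s \<Longrightarrow> wt L (Var z) s"
| "fsig L f = (ss, s) \<Longrightarrow> list_all2 (wt L) ts ss \<Longrightarrow> wt L (App f ts) s"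

primrec wf_fm :: "('s,'f,'r,'v) lang \<Rightarrow> ('f,'r,'v) fm \<Rightarrow> bool" where
  "wf_fm L (FEq t u) = (\<exists>s. wt L t s \<and> wt L u s)"
| "wf_fm L (FRel r ts) = list_all2 (wt L) ts (rsig L r)"
| "wf_fm L (FNeg \<phi>) = wf_fm L \<phi>"
| "wf_fm L (FConj \<phi> \<psi>) = (wf_fm L \<phi> \<and> wf_fm L \<psi>)"
| "wf_fm L (FEx z \<phi>) = wf_fm L \<phi>"

fun fvt :: "('f,'v) trm \<Rightarrow> 'v set" where
  "fvt (Var z) = {z}"
| "fvt (App f ts) = (\<Union>t\<in>set ts. fvt t)"

primrec fv :: "('f,'r,'v) fm \<Rightarrow> 'v set" where
  "fv (FEq t u) = fvt t \<union> fvt u"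
| "fv (FRel r ts) = (\<Union>t\<in>set ts. fvt t)"
| "fv (FNeg \<phi>) = fv \<phi>"
| "fv (FConj \<phi> \<psi>) = fv \<phi> \<union> fv \<psi>"
| "fv (FEx z \<phi>) = fv \<phi> - {z}"

definition sentence :: "('s,'f,'r,'v) lang \<Rightarrow> ('f,'r,'v) fm \<Rightarrow> bool" where
  "sentence L \<phi> \<longleftrightarrow> wf_fm L \<phi> \<and> fv \<phi> = {}"

record ('s,'f,'r,'a) struc =
  carr :: "'a set"
  esort :: "'a \<Rightarrow> 's"
  funs :: "'f \<Rightarrow> 'a list \<Rightarrow> 'a"
  rels :: "'r \<Rightarrow> 'a list \<Rightarrow> bool"

definition wf_struc :: "('s,'f,'r,'v) lang \<Rightarrow> ('s,'f,'r,'a) struc \<Rightarrow> bool" where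
  "wf_struc L S \<longleftrightarrow>
     (\<forall>s. \<exists>b\<in>carr S. esort S b = s) \<and>
     (\<forall>f args. set args \<subseteq> carr S \<and> map (esort S) args = fst (fsig L f) \<longrightarrow>
        funs S f args \<in> carr S \<and> esort S (funs S f args) = snd (fsig L f))"

fun eval :: "('s,'f,'r,'a) struc \<Rightarrow> ('v \<Rightarrow> 'a) \<Rightarrow> ('f,'v) trm \<Rightarrow> 'a" where
  "eval S v (Var z) = v z"
| "eval S v (App f ts) = funs S f (map (eval S v) ts)"

primrec sat :: "('s,'f,'r,'v) lang \<Rightarrow> ('s,'f,'r,'a) struc \<Rightarrow> ('v \<Rightarrow> 'a) \<Rightarrow> ('f,'r,'v) fm \<Rightarrow> bool" where
  "sat L S v (FEq t u) = (eval S v t = eval S v u)"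
| "sat L S v (FRel r ts) = rels S r (map (eval S v) ts)"
| "sat L S v (FNeg \<phi>) = (\<not> sat L S v \<phi>)"
| "sat L S v (FConj \<phi> \<psi>) = (sat L S v \<phi> \<and> sat L S v \<psi>)"
| "sat L S v (FEx z \<phi>) = (\<exists>b\<in>carr S. esort S b = vsort L z \<and> sat L S (v(z := b)) \<phi>)"

definition assignment :: "('s,'f,'r,'v) lang \<Rightarrow> ('s,'f,'r,'a) struc \<Rightarrow> ('v \<Rightarrow> 'a) \<Rightarrow> bool" where
  "assignment L S v \<longleftrightarrow> (\<forall>z. v z \<in> carr S \<and> esort S (v z) = vsort L z)"

definition is_model :: "('s,'f,'r,'v) lang \<Rightarrow> ('s,'f,'r,'a) struc \<Rightarrow> ('f,'r,'v) fm set \<Rightarrow> bool" where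
  "is_model L S T \<longleftrightarrow> wf_struc L S \<and> (\<forall>\<phi>\<in>T. \<forall>v. sat L S v \<phi>)"

text \<open>Semantic consequence modulo T (\<open>\<Gamma> \<turnstile> \<phi>\<close> in T), over all models of T whose universe
  lies in the type 'a. Since 'a contains the monster model, by downward
  Loewenheim-Skolem this is the usual notion.\<close>
definition entails :: "('s,'f,'r,'v) lang \<Rightarrow> ('f,'r,'v) fm set \<Rightarrow> ('f,'r,'v) fm set
                        \<Rightarrow> ('f,'r,'v) fm \<Rightarrow> 'a itself \<Rightarrow> bool" where
  "entails L T \<Gamma> \<phi> _ \<longleftrightarrow>
     (\<forall>(N :: ('s,'f,'r,'a) struc) v. is_model L N T \<and> assignment L N v \<longrightarrow>
        (\<forall>\<psi>\<in>\<Gamma>. sat L N v \<psi>) \<longrightarrow> sat L N v \<phi>)"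

definition complete_theory :: "('s,'f,'r,'v) lang \<Rightarrow> ('f,'r,'v) fm set \<Rightarrow> 'a itself \<Rightarrow> bool" where
  "complete_theory L T A \<longleftrightarrow>
     (\<forall>\<phi>\<in>T. sentence L \<phi>) \<and>
     (\<exists>N :: ('s,'f,'r,'a) struc. is_model L N T) \<and>
     (\<forall>\<phi>. sentence L \<phi> \<longrightarrow> entails L T T \<phi> A \<or> entails L T T (FNeg \<phi>) A)"

definition Aut :: "('s,'f,'r,'v) lang \<Rightarrow> ('s,'f,'r,'a) struc \<Rightarrow> ('a \<Rightarrow> 'a) set" where
  "Aut L M = {\<sigma>. bij_betw \<sigma> (carr M) (carr M) \<and> (\<forall>z. z \<notin> carr M \<longrightarrow> \<sigma> z = z) \<and>
     (\<forall>b\<in>carr M. esort M (\<sigma> b) = esort M b) \<and>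
     (\<forall>f args. set args \<subseteq> carr M \<and> map (esort M) args = fst (fsig L f) \<longrightarrow>
         \<sigma> (funs M f args) = funs M f (map \<sigma> args)) \<and>
     (\<forall>r args. set args \<subseteq> carr M \<and> map (esort M) args = rsig L r \<longrightarrow>
         (rels M r (map \<sigma> args) \<longleftrightarrow> rels M r args))}"

text \<open>Group inverse in Aut(M) (automorphisms are the identity outside the universe).\<close>
definition ginv :: "('s,'f,'r,'a) struc \<Rightarrow> ('a \<Rightarrow> 'a) \<Rightarrow> ('a \<Rightarrow> 'a)" where
  "ginv M \<sigma> = (\<lambda>z. if z \<in> carr M then inv_into (carr M) \<sigma> z else z)"

definition setpow :: "('s,'f,'r,'a) struc \<Rightarrow> ('a \<Rightarrow> 'a) set \<Rightarrow> int \<Rightarrow> ('a \<Rightarrow> 'a) set" where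
  "setpow M X e = (if e = 1 then X else ginv M ` X)"

definition setmul :: "('a \<Rightarrow> 'a) set \<Rightarrow> ('a \<Rightarrow> 'a) set \<Rightarrow> ('a \<Rightarrow> 'a) set" where
  "setmul X Y = {\<sigma> \<circ> \<tau> | \<sigma> \<tau>. \<sigma> \<in> X \<and> \<tau> \<in> Y}"

text \<open>\<open>setprods M X e n = X_0^{e_0} \<cdots> X_{n-1}^{e_{n-1}}\<close> (indices shifted to start at 0).\<close>
fun setprods :: "('s,'f,'r,'a) struc \<Rightarrow> (nat \<Rightarrow> ('a \<Rightarrow> 'a) set) \<Rightarrow> (nat \<Rightarrow> int) \<Rightarrow> nat
                 \<Rightarrow> ('a \<Rightarrow> 'a) set" where
  "setprods M X e 0 = {id}"
| "setprods M X e (Suc k) = setmul (setprods M X e k) (setpow M (X k) (e k))"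

text \<open>\<open>\<kappa>\<close> is represented as the cardinality of a set K; "short" means \<open>\<prec> K\<close>.\<close>

definition saturated :: "('s,'f,'r,'v) lang \<Rightarrow> ('s,'f,'r,'a) struc \<Rightarrow> 'k set \<Rightarrow> bool" where
  "saturated L M K \<longleftrightarrow>
    (\<forall>B z \<Phi> e. B \<subseteq> carr M \<and> B \<prec> K \<and>
       (\<forall>\<phi>\<in>\<Phi>. wf_fm L \<phi> \<and> (\<forall>w\<in>fv \<phi> - {z}. e w \<in> B \<and> esort M (e w) = vsort L w)) \<and>
       (\<forall>\<Phi>0. \<Phi>0 \<subseteq> \<Phi> \<and> finite \<Phi>0 \<longrightarrow>
          (\<exists>b\<in>carr M. esort M b = vsort L z \<and> (\<forall>\<phi>\<in>\<Phi>0. sat L M (e(z := b)) \<phi>)))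
     \<longrightarrow> (\<exists>b\<in>carr M. esort M b = vsort L z \<and> (\<forall>\<phi>\<in>\<Phi>. sat L M (e(z := b)) \<phi>)))"

definition elementary_on :: "('s,'f,'r,'v) lang \<Rightarrow> ('s,'f,'r,'a) struc \<Rightarrow> 'a set \<Rightarrow> ('a \<Rightarrow> 'a) \<Rightarrow> bool" where
  "elementary_on L M B f \<longleftrightarrow>
     (\<forall>b\<in>B. f b \<in> carr M \<and> esort M (f b) = esort M b) \<and>
     (\<forall>\<phi> e. wf_fm L \<phi> \<and> (\<forall>w\<in>fv \<phi>. e w \<in> B \<and> esort M (e w) = vsort L w) \<longrightarrow>
        (sat L M e \<phi> \<longleftrightarrow> sat L M (f \<circ> e) \<phi>))"

definition strongly_homogeneous :: "('s,'f,'r,'v) lang \<Rightarrow> ('s,'f,'r,'a) struc \<Rightarrow> 'k set \<Rightarrow> bool" where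
  "strongly_homogeneous L M K \<longleftrightarrow>
    (\<forall>B f. B \<subseteq> carr M \<and> B \<prec> K \<and> elementary_on L M B f \<longrightarrow>
       (\<exists>\<sigma>\<in>Aut L M. \<forall>b\<in>B. \<sigma> b = f b))"

text \<open>M is a monster model of the complete theory T: a model of T which is
  \<open>\<kappa>\<close>-saturated and strongly \<open>\<kappa>\<close>-homogeneous, with \<open>\<kappa> = |K|\<close> large, i.e.
  \<open>\<kappa> > |T| = |L| + \<aleph>\<^sub>0\<close>; there are at least \<open>\<kappa>\<close> variables of every sort.\<close>
definition monster :: "('s,'f,'r,'v) lang \<Rightarrow> ('f,'r,'v) fm set \<Rightarrow> ('s,'f,'r,'a) struc
                       \<Rightarrow> 'k set \<Rightarrow> bool" where
  "monster L T M K \<longleftrightarrow>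
     complete_theory L T TYPE('a) \<and> is_model L M T \<and>
     infinite K \<and> (UNIV :: 's set) \<prec> K \<and> (UNIV :: 'f set) \<prec> K \<and> (UNIV :: 'r set) \<prec> K \<and>
     (\<forall>s. K \<lesssim> {z. vsort L z = s}) \<and>
     saturated L M K \<and> strongly_homogeneous L M K"

definition fm_in :: "('s,'f,'r,'v) lang \<Rightarrow> ('i \<Rightarrow> 'v) \<Rightarrow> ('i \<Rightarrow> 'v) \<Rightarrow> ('f,'r,'v) fm \<Rightarrow> bool" where
  "fm_in L x y \<phi> \<longleftrightarrow> wf_fm L \<phi> \<and> fv \<phi> \<subseteq> range x \<union> range y"

definition tup_asg :: "('i \<Rightarrow> 'v) \<Rightarrow> ('i \<Rightarrow> 'v) \<Rightarrow> ('a \<Rightarrow> 'a) \<Rightarrow> ('i \<Rightarrow> 'a) \<Rightarrow> 'v \<Rightarrow> 'a" where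
  "tup_asg x y \<sigma> a = (\<lambda>z. if z \<in> range x then \<sigma> (a (inv x z))
                         else if z \<in> range y then a (inv y z) else undefined)"

definition A_set :: "('s,'f,'r,'v) lang \<Rightarrow> ('s,'f,'r,'a) struc \<Rightarrow> ('f,'r,'v) fm set
                     \<Rightarrow> ('i \<Rightarrow> 'v) \<Rightarrow> ('i \<Rightarrow> 'v) \<Rightarrow> ('i \<Rightarrow> 'a) \<Rightarrow> ('a \<Rightarrow> 'a) set" where
  "A_set L M \<pi> x y a = {\<sigma>\<in>Aut L M. \<forall>\<phi>\<in>\<pi>. sat L M (tup_asg x y \<sigma> a) \<phi>}"

text \<open>\<open>{\<sigma> \<in> Aut(M). M \<Turnstile> \<psi>(\<sigma>(d), e)}\<close>: the variables in U get the (moved) parameters d,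
  the others the fixed parameters e.\<close>
definition rel_definable :: "('s,'f,'r,'v) lang \<Rightarrow> ('s,'f,'r,'a) struc \<Rightarrow> ('a \<Rightarrow> 'a) set \<Rightarrow> bool" where
  "rel_definable L M A \<longleftrightarrow>
     (\<exists>\<psi> U d e. wf_fm L \<psi> \<and>
        (\<forall>z\<in>fv \<psi> \<inter> U. d z \<in> carr M \<and> esort M (d z) = vsort L z) \<and>
        (\<forall>z\<in>fv \<psi> - U. e z \<in> carr M \<and> esort M (e z) = vsort L z) \<and>
        A = {\<sigma>\<in>Aut L M. sat L M (\<lambda>z. if z \<in> U then \<sigma> (d z) else e z) \<psi>})"

end

theory Submission
  imports Defs
begin

lemma eval_cong: "(\<forall>z\<in>fvt t. v z = v' z) \<Longrightarrow> eval S v t = eval S v' t"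
proof (induction t)
  case (Var z) then show ?case by simp
next
  case (App f ts)
  have "map (eval S v) ts = map (eval S v') ts"
    using App by (auto simp: map_eq_conv)
  then show ?case by (metis eval.simps(2))
qed

lemma sat_cong: "(\<forall>z\<in>fv \<phi>. v z = v' z) \<Longrightarrow> sat L S v \<phi> = sat L S v' \<phi>"
proof (induction \<phi> arbitrary: v v')
  case (FEq t u) then show ?case using eval_cong[of t v v' S] eval_cong[of u v v' S] by simp
next
  case (FRel r ts)
  have "map (eval S v) ts = map (eval S v') ts"
    using FRel by (auto simp: map_eq_conv intro!: eval_cong)
  then show ?case by (metis sat.simps(2))
next
  case (FNeg \<phi>) then show ?case by simp
next
  case (FConj \<phi> \<psi>)
  have "sat L S v \<phi> = sat L S v' \<phi>" using FConj.IH(1) FConj.prems by auto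
  moreover have "sat L S v \<psi> = sat L S v' \<psi>" using FConj.IH(2) FConj.prems by auto
  ultimately show ?case by simp
next
  case (FEx z \<phi>)
  have "\<And>b. sat L S (v(z:=b)) \<phi> = sat L S (v'(z:=b)) \<phi>"
    using FEx by (intro FEx.IH) auto
  then show ?case by simp
qed


definition okv :: "('s,'f,'r,'v) lang \<Rightarrow> ('s,'f,'r,'a) struc \<Rightarrow> 'v set \<Rightarrow> ('v \<Rightarrow> 'a) \<Rightarrow> bool" where
  "okv L M W v \<longleftrightarrow> (\<forall>z\<in>W. v z \<in> carr M \<and> esort M (v z) = vsort L z)"

lemma eval_wt:
  assumes "wf_struc L M" and "wt L t s" and "okv L M (fvt t) v"
  shows "eval M v t \<in> carr M \<and> esort M (eval M v t) = s"
  using assms(2,3)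
proof (induction t s rule: wt.induct)
  case (1 z s) then show ?case by (auto simp: okv_def)
next
  case (2 f ss s ts)
  have h: "\<forall>i<length ts. eval M v (ts!i) \<in> carr M \<and> esort M (eval M v (ts!i)) = ss!i"
  proof (intro allI impI)
    fix i assume i: "i < length ts"
    then have "ts!i \<in> set ts" by simp
    then have "okv L M (fvt (ts!i)) v" using 2(3) by (auto simp: okv_def)
    then show "eval M v (ts!i) \<in> carr M \<and> esort M (eval M v (ts!i)) = ss!i"
      using 2(2) i by (auto simp: list_all2_conv_all_nth)
  qed
  have l: "length ts = length ss" using 2(2) by (simp add: list_all2_conv_all_nth)
  have "set (map (eval M v) ts) \<subseteq> carr M" using h by (auto simp: in_set_conv_nth)
  moreover have "map (esort M) (map (eval M v) ts) = fst (fsig L f)"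
    using h l 2(1) by (auto simp: list_eq_iff_nth_eq)
  ultimately show ?case using assms(1) 2(1) unfolding wf_struc_def by auto
qed

lemma args_ok:
  assumes "wf_struc L M" and "list_all2 (wt L) ts ss" and "\<forall>t\<in>set ts. okv L M (fvt t) v"
  shows "set (map (eval M v) ts) \<subseteq> carr M \<and> map (esort M) (map (eval M v) ts) = ss"
proof -
  have h: "\<forall>i<length ts. eval M v (ts!i) \<in> carr M \<and> esort M (eval M v (ts!i)) = ss!i"
    using assms eval_wt by (fastforce simp: list_all2_conv_all_nth)
  have l: "length ts = length ss" using assms(2) by (simp add: list_all2_conv_all_nth)
  show ?thesis using h l by (auto simp: list_eq_iff_nth_eq in_set_conv_nth)
qed

lemma AutD:
  assumes "\<sigma> \<in> Aut L M"
  shows "bij_betw \<sigma> (carr M) (carr M)" "\<And>z. z \<notin> carr M \<Longrightarrow> \<sigma> z = z"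
    "\<And>b. b \<in> carr M \<Longrightarrow> esort M (\<sigma> b) = esort M b"
    "\<And>f args. set args \<subseteq> carr M \<Longrightarrow> map (esort M) args = fst (fsig L f) \<Longrightarrow>
         \<sigma> (funs M f args) = funs M f (map \<sigma> args)"
    "\<And>r args. set args \<subseteq> carr M \<Longrightarrow> map (esort M) args = rsig L r \<Longrightarrow>
         (rels M r (map \<sigma> args) \<longleftrightarrow> rels M r args)"
  using assms unfolding Aut_def by auto

lemma eval_aut:
  assumes "\<sigma> \<in> Aut L M" and "wf_struc L M" and "wt L t s" and "okv L M (fvt t) v"
  shows "eval M (\<sigma> \<circ> v) t = \<sigma> (eval M v t)"
  using assms(3,4)
proof (induction t s rule: wt.induct)
  case (1 z s) then show ?case by simp
next
  case (2 f ss s ts)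
  have la: "list_all2 (wt L) ts ss" using 2(2) by (auto simp: list_all2_conv_all_nth)
  have ok: "\<forall>t\<in>set ts. okv L M (fvt t) v" using 2(3) by (auto simp: okv_def)
  have e: "map (eval M (\<sigma> \<circ> v)) ts = map \<sigma> (map (eval M v) ts)"
  proof (rule nth_equalityI)
    fix i assume i: "i < length (map (eval M (\<sigma> \<circ> v)) ts)"
    then have "ts!i \<in> set ts" by simp
    then have "okv L M (fvt (ts!i)) v" using ok by auto
    then show "map (eval M (\<sigma> \<circ> v)) ts ! i = map \<sigma> (map (eval M v) ts) ! i"
      using 2(2) i by (auto simp: list_all2_conv_all_nth comp_def)
  qed simp
  have "set (map (eval M v) ts) \<subseteq> carr M \<and> map (esort M) (map (eval M v) ts) = ss"
    using args_ok[OF assms(2) la ok] .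
  then have "\<sigma> (funs M f (map (eval M v) ts)) = funs M f (map \<sigma> (map (eval M v) ts))"
    using AutD(4)[OF assms(1), of "map (eval M v) ts" f] 2(1) by simp
  then show ?case by (simp only: eval.simps e)
qed

lemma sat_aut:
  assumes "\<sigma> \<in> Aut L M" and "wf_struc L M" and "wf_fm L \<phi>" and "okv L M (fv \<phi>) v"
  shows "sat L M (\<sigma> \<circ> v) \<phi> = sat L M v \<phi>"
  using assms(3,4)
proof (induction \<phi> arbitrary: v)
  case (FEq t u)
  then obtain s where s: "wt L t s" "wt L u s" by auto
  have okt: "okv L M (fvt t) v" "okv L M (fvt u) v" using FEq by (auto simp: okv_def)
  have "eval M v t \<in> carr M" "eval M v u \<in> carr M"
    using eval_wt[OF assms(2) s(1) okt(1)] eval_wt[OF assms(2) s(2) okt(2)] by auto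
  moreover have "inj_on \<sigma> (carr M)" using AutD(1)[OF assms(1)] bij_betw_def by blast
  ultimately show ?case
    using eval_aut[OF assms(1,2) s(1) okt(1)] eval_aut[OF assms(1,2) s(2) okt(2)]
    by (simp del: comp_apply) (metis inj_onD)
next
  case (FRel r ts)
  have la: "list_all2 (wt L) ts (rsig L r)" using FRel by simp
  have ok: "\<forall>t\<in>set ts. okv L M (fvt t) v" using FRel(2) by (auto simp: okv_def)
  have e: "map (eval M (\<sigma> \<circ> v)) ts = map \<sigma> (map (eval M v) ts)"
  proof (rule nth_equalityI)
    fix i assume i: "i < length (map (eval M (\<sigma> \<circ> v)) ts)"
    then have "ts!i \<in> set ts" by simp
    then have "okv L M (fvt (ts!i)) v" using ok by auto
    then show "map (eval M (\<sigma> \<circ> v)) ts ! i = map \<sigma> (map (eval M v) ts) ! i"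
      using la i eval_aut[OF assms(1,2)] by (auto simp: list_all2_conv_all_nth)
  qed simp
  have "set (map (eval M v) ts) \<subseteq> carr M \<and> map (esort M) (map (eval M v) ts) = rsig L r"
    using args_ok[OF assms(2) la ok] .
  then have "rels M r (map \<sigma> (map (eval M v) ts)) = rels M r (map (eval M v) ts)"
    using AutD(5)[OF assms(1), of "map (eval M v) ts" r] by blast
  then show ?case by (simp only: sat.simps e)
next
  case (FNeg \<phi>) then show ?case by simp
next
  case (FConj \<phi> \<psi>)
  have "sat L M (\<sigma> \<circ> v) \<phi> = sat L M v \<phi>" using FConj.IH(1) FConj.prems by (auto simp: okv_def comp_def)
  moreover have "sat L M (\<sigma> \<circ> v) \<psi> = sat L M v \<psi>" using FConj.IH(2) FConj.prems by (auto simp: okv_def comp_def)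
  ultimately show ?case by (simp add: comp_def)
next
  case (FEx z \<phi>)
  have bij: "bij_betw \<sigma> (carr M) (carr M)" using AutD(1)[OF assms(1)] .
  have IH: "\<And>b. b \<in> carr M \<Longrightarrow> esort M b = vsort L z \<Longrightarrow>
      sat L M (\<sigma> \<circ> (v(z:=b))) \<phi> = sat L M (v(z:=b)) \<phi>"
    using FEx by (intro FEx.IH) (auto simp: okv_def)
  have c: "\<And>b. \<sigma> \<circ> (v(z:=b)) = (\<sigma> \<circ> v)(z := \<sigma> b)" by auto
  show ?case
  proof
    assume "sat L M (\<sigma> \<circ> v) (FEx z \<phi>)"
    then obtain b where b: "b \<in> carr M" "esort M b = vsort L z" "sat L M ((\<sigma> \<circ> v)(z:=b)) \<phi>" by auto
    define b' where "b' = inv_into (carr M) \<sigma> b"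
    have b': "b' \<in> carr M" "\<sigma> b' = b" using bij b unfolding b'_def
      by (auto simp: bij_betw_def inv_into_into f_inv_into_f)
    have "esort M b' = vsort L z" using AutD(3)[OF assms(1) b'(1)] b' b by simp
    then show "sat L M v (FEx z \<phi>)" using IH[of b'] b b' c by auto
  next
    assume "sat L M v (FEx z \<phi>)"
    then obtain b where b: "b \<in> carr M" "esort M b = vsort L z" "sat L M (v(z:=b)) \<phi>" by auto
    have "\<sigma> b \<in> carr M" using bij b by (auto simp: bij_betw_def)
    moreover have "esort M (\<sigma> b) = vsort L z" using AutD(3)[OF assms(1) b(1)] b by simp
    ultimately show "sat L M (\<sigma> \<circ> v) (FEx z \<phi>)" using IH[of b] b c by force
  qed
qed


lemma id_Aut: "id \<in> Aut L M"
  unfolding Aut_def by (auto simp: map_idI)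

lemma comp_Aut: "f \<in> Aut L M \<Longrightarrow> g \<in> Aut L M \<Longrightarrow> f \<circ> g \<in> Aut L M"
proof -
  assume f: "f \<in> Aut L M" and g: "g \<in> Aut L M"
  have b: "bij_betw (f \<circ> g) (carr M) (carr M)"
    using AutD(1)[OF f] AutD(1)[OF g] bij_betw_trans by blast
  have gc: "\<And>b. b \<in> carr M \<Longrightarrow> g b \<in> carr M" using AutD(1)[OF g] by (auto simp: bij_betw_def)
  show ?thesis unfolding Aut_def
  proof (intro CollectI conjI allI impI ballI)
    show "bij_betw (f \<circ> g) (carr M) (carr M)" by (rule b)
    show "\<And>z. z \<notin> carr M \<Longrightarrow> (f \<circ> g) z = z" using AutD(2)[OF f] AutD(2)[OF g] by simp
    show "\<And>b. b \<in> carr M \<Longrightarrow> esort M ((f \<circ> g) b) = esort M b"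
      using AutD(3)[OF f] AutD(3)[OF g] gc by simp
  next
    fix h args assume a: "set args \<subseteq> carr M \<and> map (esort M) args = fst (fsig L h)"
    have me: "map (esort M) (map g args) = map (esort M) args"
      unfolding map_map by (rule map_cong) (use a AutD(3)[OF g] in auto)
    have a2: "set (map g args) \<subseteq> carr M" "map (esort M) (map g args) = fst (fsig L h)"
      using a gc me by auto
    show "(f \<circ> g) (funs M h args) = funs M h (map (f \<circ> g) args)"
      using AutD(4)[OF g, of args h] AutD(4)[OF f a2] a by simp
  next
    fix r args assume a: "set args \<subseteq> carr M \<and> map (esort M) args = rsig L r"
    have me: "map (esort M) (map g args) = map (esort M) args"
      unfolding map_map by (rule map_cong) (use a AutD(3)[OF g] in auto)
    have a2: "set (map g args) \<subseteq> carr M" "map (esort M) (map g args) = rsig L r"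
      using a gc me by auto
    show "rels M r (map (f \<circ> g) args) = rels M r args"
      using AutD(5)[OF g, of args r] AutD(5)[OF f a2] a by simp
  qed
qed

lemma ginv_in: "f \<in> Aut L M \<Longrightarrow> b \<in> carr M \<Longrightarrow> ginv M f b \<in> carr M \<and> f (ginv M f b) = b"
proof -
  assume f: "f \<in> Aut L M" and b: "b \<in> carr M"
  have "inj_on f (carr M)" "f ` carr M = carr M" using AutD(1)[OF f] by (auto simp: bij_betw_def)
  then show ?thesis using b unfolding ginv_def by (auto intro: inv_into_into f_inv_into_f)
qed

lemma ginv_left_pt: "f \<in> Aut L M \<Longrightarrow> ginv M f (f z) = z"
proof -
  assume f: "f \<in> Aut L M"
  show ?thesis
  proof (cases "z \<in> carr M")
    case True
    then have "f z \<in> carr M" using AutD(1)[OF f] by (auto simp: bij_betw_def)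
    then show ?thesis using True AutD(1)[OF f] unfolding ginv_def
      by (auto simp: bij_betw_def inv_into_f_f)
  next
    case False then show ?thesis using AutD(2)[OF f] unfolding ginv_def by simp
  qed
qed

lemma ginv_right_pt: "f \<in> Aut L M \<Longrightarrow> f (ginv M f z) = z"
proof -
  assume f: "f \<in> Aut L M"
  show ?thesis
  proof (cases "z \<in> carr M")
    case True then show ?thesis using ginv_in[OF f] by blast
  next
    case False then show ?thesis using AutD(2)[OF f] unfolding ginv_def by simp
  qed
qed

lemma ginv_left: "f \<in> Aut L M \<Longrightarrow> ginv M f \<circ> f = id"
  using ginv_left_pt by fastforce

lemma ginv_right: "f \<in> Aut L M \<Longrightarrow> f \<circ> ginv M f = id"
  using ginv_right_pt by fastforce

lemma ginv_Aut:
  assumes f: "f \<in> Aut L M" and wf: "wf_struc L M"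
  shows "ginv M f \<in> Aut L M"
proof -
  have gc: "\<And>b. b \<in> carr M \<Longrightarrow> ginv M f b \<in> carr M" using ginv_in[OF f] by blast
  have gs: "\<And>b. b \<in> carr M \<Longrightarrow> esort M (ginv M f b) = esort M b"
    using ginv_in[OF f] AutD(3)[OF f] by metis
  have b: "bij_betw (ginv M f) (carr M) (carr M)"
  proof -
    have "bij_betw (inv_into (carr M) f) (carr M) (carr M)"
      using AutD(1)[OF f] bij_betw_inv_into by blast
    then show ?thesis unfolding ginv_def by (rule bij_betw_cong[THEN iffD1, rotated]) auto
  qed
  show ?thesis unfolding Aut_def
  proof (intro CollectI conjI allI impI ballI)
    show "bij_betw (ginv M f) (carr M) (carr M)" by (rule b)
    show "\<And>z. z \<notin> carr M \<Longrightarrow> ginv M f z = z" unfolding ginv_def by simp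
    show "\<And>b. b \<in> carr M \<Longrightarrow> esort M (ginv M f b) = esort M b" by (rule gs)
  next
    fix h args assume a: "set args \<subseteq> carr M \<and> map (esort M) args = fst (fsig L h)"
    have me: "map (esort M) (map (ginv M f) args) = map (esort M) args"
      unfolding map_map by (rule map_cong) (use a gs in auto)
    have a2: "set (map (ginv M f) args) \<subseteq> carr M" "map (esort M) (map (ginv M f) args) = fst (fsig L h)"
      using a gc me by auto
    have m: "map f (map (ginv M f) args) = args" using ginv_right_pt[OF f] by (simp add: map_idI)
    have "f (funs M h (map (ginv M f) args)) = funs M h args"
      using AutD(4)[OF f a2] m by simp
    then show "ginv M f (funs M h args) = funs M h (map (ginv M f) args)"
      using ginv_left_pt[OF f] by metis
  next
    fix r args assume a: "set args \<subseteq> carr M \<and> map (esort M) args = rsig L r"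
    have me: "map (esort M) (map (ginv M f) args) = map (esort M) args"
      unfolding map_map by (rule map_cong) (use a gs in auto)
    have a2: "set (map (ginv M f) args) \<subseteq> carr M" "map (esort M) (map (ginv M f) args) = rsig L r"
      using a gc me by auto
    have m: "map f (map (ginv M f) args) = args" using ginv_right_pt[OF f] by (simp add: map_idI)
    show "rels M r (map (ginv M f) args) = rels M r args"
      using AutD(5)[OF f a2] m by simp
  qed
qed

lemma ginv_unique: "f \<in> Aut L M \<Longrightarrow> f \<circ> g = id \<Longrightarrow> ginv M f = g"
proof -
  assume f: "f \<in> Aut L M" and fg: "f \<circ> g = id"
  have "ginv M f = ginv M f \<circ> (f \<circ> g)" using fg by simp
  also have "\<dots> = (ginv M f \<circ> f) \<circ> g" by (simp add: comp_assoc)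
  also have "\<dots> = g" using ginv_left[OF f] by simp
  finally show ?thesis .
qed

lemma ginv_comp: "f \<in> Aut L M \<Longrightarrow> g \<in> Aut L M \<Longrightarrow> ginv M (f \<circ> g) = ginv M g \<circ> ginv M f"
proof -
  assume f: "f \<in> Aut L M" and g: "g \<in> Aut L M"
  have "(f \<circ> g) \<circ> (ginv M g \<circ> ginv M f) = f \<circ> (g \<circ> ginv M g) \<circ> ginv M f" by (simp add: comp_assoc)
  also have "\<dots> = id" using ginv_right[OF f] ginv_right[OF g] by simp
  finally show ?thesis using ginv_unique comp_Aut[OF f g] by blast
qed

lemma ginv_ginv: "f \<in> Aut L M \<Longrightarrow> wf_struc L M \<Longrightarrow> ginv M (ginv M f) = f"
  using ginv_unique[OF ginv_Aut] ginv_left by blast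

lemma ginv_id: "ginv M id = id"
  using ginv_unique[OF id_Aut] by (metis comp_id)


definition pw :: "('s,'f,'r,'a) struc \<Rightarrow> ('a \<Rightarrow> 'a) \<Rightarrow> int \<Rightarrow> ('a \<Rightarrow> 'a)" where
  "pw M \<tau> e = (if e = 1 then \<tau> else ginv M \<tau>)"

fun gprod :: "('s,'f,'r,'a) struc \<Rightarrow> (nat \<Rightarrow> 'a \<Rightarrow> 'a) \<Rightarrow> (nat \<Rightarrow> int) \<Rightarrow> nat \<Rightarrow> ('a \<Rightarrow> 'a)" where
  "gprod M \<tau> e 0 = id"
| "gprod M \<tau> e (Suc k) = gprod M \<tau> e k \<circ> pw M (\<tau> k) (e k)"

lemma gprod_cong: "\<forall>k<n. \<tau> k = \<tau>' k \<Longrightarrow> gprod M \<tau> e n = gprod M \<tau>' e n"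
  by (induction n) auto

lemma setpow_pw: "setpow M X e = (\<lambda>t. pw M t e) ` X"
  unfolding setpow_def pw_def by auto

lemma setprods_iff:
  "\<sigma> \<in> setprods M X e n \<longleftrightarrow> (\<exists>\<tau>. (\<forall>k<n. \<tau> k \<in> X k) \<and> \<sigma> = gprod M \<tau> e n)"
proof (induction n arbitrary: \<sigma>)
  case 0 then show ?case by (simp add: id_def)
next
  case (Suc n)
  show ?case
  proof
    assume "\<sigma> \<in> setprods M X e (Suc n)"
    then obtain s t where st: "\<sigma> = s \<circ> t" "s \<in> setprods M X e n" "t \<in> setpow M (X n) (e n)"
      by (auto simp: setmul_def)
    obtain \<tau> where \<tau>: "\<forall>k<n. \<tau> k \<in> X k" "s = gprod M \<tau> e n" using Suc st(2) by blast
    obtain t0 where t0: "t0 \<in> X n" "t = pw M t0 (e n)" using st(3) by (auto simp: setpow_pw)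
    define \<tau>' where "\<tau>' = \<tau>(n := t0)"
    have "gprod M \<tau>' e n = gprod M \<tau> e n" by (rule gprod_cong) (simp add: \<tau>'_def)
    then have "\<sigma> = gprod M \<tau>' e (Suc n)" using st \<tau> t0 by (simp add: \<tau>'_def)
    moreover have "\<forall>k<Suc n. \<tau>' k \<in> X k" using \<tau> t0 by (simp add: \<tau>'_def less_Suc_eq)
    ultimately show "\<exists>\<tau>. (\<forall>k<Suc n. \<tau> k \<in> X k) \<and> \<sigma> = gprod M \<tau> e (Suc n)" by blast
  next
    assume "\<exists>\<tau>. (\<forall>k<Suc n. \<tau> k \<in> X k) \<and> \<sigma> = gprod M \<tau> e (Suc n)"
    then obtain \<tau> where \<tau>: "\<forall>k<Suc n. \<tau> k \<in> X k" "\<sigma> = gprod M \<tau> e (Suc n)" by blast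
    have "gprod M \<tau> e n \<in> setprods M X e n" using Suc.IH \<tau>(1) by (auto simp: less_Suc_eq)
    moreover have "pw M (\<tau> n) (e n) \<in> setpow M (X n) (e n)" using \<tau> by (auto simp: setpow_pw)
    ultimately show "\<sigma> \<in> setprods M X e (Suc n)" using \<tau> by (auto simp: setmul_def)
  qed
qed

definition asg2 :: "('i \<Rightarrow> 'v) \<Rightarrow> ('i \<Rightarrow> 'v) \<Rightarrow> ('i \<Rightarrow> 'a) \<Rightarrow> ('i \<Rightarrow> 'a) \<Rightarrow> 'v \<Rightarrow> 'a" where
  "asg2 x y c c' = (\<lambda>z. if z \<in> range x then c (inv x z) else if z \<in> range y then c' (inv y z) else undefined)"

lemma tup_asg_asg2: "tup_asg x y \<sigma> a = asg2 x y (\<sigma> \<circ> a) a"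
  unfolding tup_asg_def asg2_def by auto

definition tupok :: "('s,'f,'r,'v) lang \<Rightarrow> ('s,'f,'r,'a) struc \<Rightarrow> ('i \<Rightarrow> 'v) \<Rightarrow> ('i \<Rightarrow> 'a) \<Rightarrow> bool" where
  "tupok L M x c \<longleftrightarrow> (\<forall>i. c i \<in> carr M \<and> esort M (c i) = vsort L (x i))"

lemma tupok_aut: "h \<in> Aut L M \<Longrightarrow> tupok L M x c \<Longrightarrow> tupok L M x (h \<circ> c)"
  unfolding tupok_def using AutD(1,3)[of h L M] by (auto simp: bij_betw_def)

lemma okv_asg2:
  assumes "inj x" "inj y" "range x \<inter> range y = {}" "\<forall>i. vsort L (x i) = vsort L (y i)"
    and "tupok L M x c" "tupok L M x c'" and "W \<subseteq> range x \<union> range y"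
  shows "okv L M W (asg2 x y c c')"
  using assms unfolding okv_def tupok_def asg2_def by auto

lemma transport:
  assumes "inj x" "inj y" "range x \<inter> range y = {}" "\<forall>i. vsort L (x i) = vsort L (y i)"
    and "tupok L M x c" "tupok L M x c'" and "fm_in L x y \<phi>"
    and "h \<in> Aut L M" "wf_struc L M"
  shows "sat L M (asg2 x y (h \<circ> c) (h \<circ> c')) \<phi> = sat L M (asg2 x y c c') \<phi>"
proof -
  have "sat L M (asg2 x y (h \<circ> c) (h \<circ> c')) \<phi> = sat L M (h \<circ> asg2 x y c c') \<phi>"
    by (rule sat_cong) (use assms(7) in \<open>auto simp: asg2_def fm_in_def\<close>)
  also have "\<dots> = sat L M (asg2 x y c c') \<phi>"
    using assms by (intro sat_aut okv_asg2) (auto simp: fm_in_def)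
  finally show ?thesis .
qed

definition prs :: "('s,'f,'r,'v) lang \<Rightarrow> ('s,'f,'r,'a) struc \<Rightarrow> ('i \<Rightarrow> 'v) \<Rightarrow> ('i \<Rightarrow> 'v)
    \<Rightarrow> ('f,'r,'v) fm set \<Rightarrow> int \<Rightarrow> ('i \<Rightarrow> 'a) \<Rightarrow> ('i \<Rightarrow> 'a) \<Rightarrow> bool" where
  "prs L M x y \<pi> e c c' \<longleftrightarrow> (if e = 1 then \<forall>\<phi>\<in>\<pi>. sat L M (asg2 x y c c') \<phi>
                              else \<forall>\<phi>\<in>\<pi>. sat L M (asg2 x y c' c) \<phi>)"


lemma pw_Aut: "t \<in> Aut L M \<Longrightarrow> wf_struc L M \<Longrightarrow> pw M t e \<in> Aut L M"
  unfolding pw_def using ginv_Aut by auto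

lemma gprod_Aut: "\<forall>k<n. \<tau> k \<in> Aut L M \<Longrightarrow> wf_struc L M \<Longrightarrow> gprod M \<tau> e n \<in> Aut L M"
  by (induction n) (auto intro: comp_Aut pw_Aut id_Aut)

lemma core:
  assumes ix: "inj x" and iy: "inj y" and dj: "range x \<inter> range y = {}"
    and vs: "\<forall>i. vsort L (x i) = vsort L (y i)" and wf: "wf_struc L M"
    and a: "tupok L M x a" and fm: "\<forall>k<n. \<forall>\<phi>\<in>\<pi> k. fm_in L x y \<phi>"
  shows "\<sigma> \<in> setprods M (\<lambda>k. A_set L M (\<pi> k) x y a) \<epsilon> n \<longleftrightarrow>
    (\<exists>h. h 0 = \<sigma> \<and> h n = id \<and> (\<forall>k\<le>n. h k \<in> Aut L M) \<and>
       (\<forall>k<n. prs L M x y (\<pi> k) (\<epsilon> k) (ginv M (h (Suc k)) \<circ> a) (ginv M (h k) \<circ> a)))"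
proof
  note tr = transport[OF ix iy dj vs]
  assume "\<sigma> \<in> setprods M (\<lambda>k. A_set L M (\<pi> k) x y a) \<epsilon> n"
  then obtain \<tau> where \<tau>: "\<forall>k<n. \<tau> k \<in> A_set L M (\<pi> k) x y a" and s: "\<sigma> = gprod M \<tau> \<epsilon> n"
    unfolding setprods_iff by blast
  have \<tau>A: "\<forall>k<n. \<tau> k \<in> Aut L M" using \<tau> by (auto simp: A_set_def)
  have \<tau>s: "\<And>k \<phi>. k < n \<Longrightarrow> \<phi> \<in> \<pi> k \<Longrightarrow> sat L M (asg2 x y (\<tau> k \<circ> a) a) \<phi>"
    using \<tau> by (auto simp: A_set_def tup_asg_asg2)
  define g where "g k = gprod M \<tau> \<epsilon> k" for k
  have gA: "\<And>k. k \<le> n \<Longrightarrow> g k \<in> Aut L M" unfolding g_def using \<tau>A wf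
    by (intro gprod_Aut) auto
  have sA: "\<sigma> \<in> Aut L M" using gA[of n] s g_def by simp
  define h where "h k = ginv M (g k) \<circ> \<sigma>" for k
  have hA: "\<forall>k\<le>n. h k \<in> Aut L M" unfolding h_def using gA sA ginv_Aut wf comp_Aut by blast
  have h0: "h 0 = \<sigma>" unfolding h_def g_def by (simp add: ginv_id)
  have hn: "h n = id" unfolding h_def g_def s using ginv_left[OF sA] s by simp
  have gih: "\<And>k. k \<le> n \<Longrightarrow> ginv M (h k) = ginv M \<sigma> \<circ> g k"
    unfolding h_def using gA sA ginv_comp ginv_Aut ginv_ginv wf by metis
  have "\<forall>k<n. prs L M x y (\<pi> k) (\<epsilon> k) (ginv M (h (Suc k)) \<circ> a) (ginv M (h k) \<circ> a)"
  proof (intro allI impI)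
    fix k assume k: "k < n"
    define m where "m = ginv M \<sigma> \<circ> g k"
    have mA: "m \<in> Aut L M" unfolding m_def using comp_Aut[OF ginv_Aut[OF sA wf] gA[of k]] k by simp
    have e1: "ginv M (h k) = m" using gih[of k] k m_def by simp
    have e2: "ginv M (h (Suc k)) = m \<circ> pw M (\<tau> k) (\<epsilon> k)"
      using gih[of "Suc k"] k unfolding m_def g_def by (simp add: comp_assoc)
    show "prs L M x y (\<pi> k) (\<epsilon> k) (ginv M (h (Suc k)) \<circ> a) (ginv M (h k) \<circ> a)"
    proof (cases "\<epsilon> k = 1")
      case True
      have "\<forall>\<phi>\<in>\<pi> k. sat L M (asg2 x y (m \<circ> (\<tau> k \<circ> a)) (m \<circ> a)) \<phi>"
      proof
        fix \<phi> assume p: "\<phi> \<in> \<pi> k"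
        have "tupok L M x (\<tau> k \<circ> a)" using tupok_aut \<tau>A k a by blast
        then show "sat L M (asg2 x y (m \<circ> (\<tau> k \<circ> a)) (m \<circ> a)) \<phi>"
          using tr[OF _ a _ mA wf] \<tau>s[OF k p] fm k p by blast
      qed
      then show ?thesis using True e1 e2 unfolding prs_def pw_def by (simp add: comp_assoc)
    next
      case False
      define m' where "m' = m \<circ> ginv M (\<tau> k)"
      have m'A: "m' \<in> Aut L M" unfolding m'_def using mA \<tau>A k ginv_Aut wf comp_Aut by blast
      have mm: "m' \<circ> \<tau> k = m" unfolding m'_def using ginv_left[of "\<tau> k" L M] \<tau>A k
        by (simp add: comp_assoc)
      have "\<forall>\<phi>\<in>\<pi> k. sat L M (asg2 x y (m' \<circ> (\<tau> k \<circ> a)) (m' \<circ> a)) \<phi>"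
      proof
        fix \<phi> assume p: "\<phi> \<in> \<pi> k"
        have "tupok L M x (\<tau> k \<circ> a)" using tupok_aut \<tau>A k a by blast
        then show "sat L M (asg2 x y (m' \<circ> (\<tau> k \<circ> a)) (m' \<circ> a)) \<phi>"
          using tr[OF _ a _ m'A wf] \<tau>s[OF k p] fm k p by blast
      qed
      then have "\<forall>\<phi>\<in>\<pi> k. sat L M (asg2 x y (m \<circ> a) (m' \<circ> a)) \<phi>"
        using mm by (simp add: comp_assoc[symmetric])
      then show ?thesis using False e1 e2 unfolding prs_def pw_def m'_def by (simp add: comp_assoc)
    qed
  qed
  then show "\<exists>h. h 0 = \<sigma> \<and> h n = id \<and> (\<forall>k\<le>n. h k \<in> Aut L M) \<and>
       (\<forall>k<n. prs L M x y (\<pi> k) (\<epsilon> k) (ginv M (h (Suc k)) \<circ> a) (ginv M (h k) \<circ> a))"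
    using h0 hn hA by blast
next
  note tr = transport[OF ix iy dj vs]
  assume "\<exists>h. h 0 = \<sigma> \<and> h n = id \<and> (\<forall>k\<le>n. h k \<in> Aut L M) \<and>
       (\<forall>k<n. prs L M x y (\<pi> k) (\<epsilon> k) (ginv M (h (Suc k)) \<circ> a) (ginv M (h k) \<circ> a))"
  then obtain h where h0: "h 0 = \<sigma>" and hn: "h n = id" and hA: "\<forall>k\<le>n. h k \<in> Aut L M"
    and hp: "\<forall>k<n. prs L M x y (\<pi> k) (\<epsilon> k) (ginv M (h (Suc k)) \<circ> a) (ginv M (h k) \<circ> a)"
    by blast
  define \<tau> where "\<tau> k = (if \<epsilon> k = 1 then h k \<circ> ginv M (h (Suc k)) else h (Suc k) \<circ> ginv M (h k))" for k
  have gi: "\<And>k. k \<le> n \<Longrightarrow> ginv M (h k) \<in> Aut L M" using hA ginv_Aut wf by blast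
  have \<tau>A: "\<And>k. k < n \<Longrightarrow> \<tau> k \<in> Aut L M"
  proof -
    fix k assume k: "k < n"
    then have "h k \<in> Aut L M" "h (Suc k) \<in> Aut L M" "ginv M (h k) \<in> Aut L M"
      "ginv M (h (Suc k)) \<in> Aut L M" using hA gi by auto
    then show "\<tau> k \<in> Aut L M" by (simp add: \<tau>_def comp_Aut)
  qed
  have pwt: "\<And>k. k < n \<Longrightarrow> pw M (\<tau> k) (\<epsilon> k) = h k \<circ> ginv M (h (Suc k))"
  proof -
    fix k assume k: "k < n"
    show "pw M (\<tau> k) (\<epsilon> k) = h k \<circ> ginv M (h (Suc k))"
    proof (cases "\<epsilon> k = 1")
      case True then show ?thesis unfolding pw_def \<tau>_def by simp
    next
      case False
      have "ginv M (h (Suc k) \<circ> ginv M (h k)) = ginv M (ginv M (h k)) \<circ> ginv M (h (Suc k))"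
        using ginv_comp[of "h (Suc k)" L M "ginv M (h k)"] hA gi[of k] k by simp
      also have "\<dots> = h k \<circ> ginv M (h (Suc k))" using ginv_ginv[of "h k" L M] hA k wf by simp
      finally show ?thesis using False unfolding pw_def \<tau>_def by simp
    qed
  qed
  have gp: "\<And>k. k \<le> n \<Longrightarrow> gprod M \<tau> \<epsilon> k = h 0 \<circ> ginv M (h k)"
  proof -
    fix k show "k \<le> n \<Longrightarrow> gprod M \<tau> \<epsilon> k = h 0 \<circ> ginv M (h k)"
    proof (induction k)
      case 0 then show ?case using ginv_right[of "h 0" L M] hA by simp
    next
      case (Suc k)
      then have "gprod M \<tau> \<epsilon> (Suc k) = h 0 \<circ> ginv M (h k) \<circ> (h k \<circ> ginv M (h (Suc k)))"
        using pwt by (simp add: comp_def)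
      also have "\<dots> = h 0 \<circ> (ginv M (h k) \<circ> h k) \<circ> ginv M (h (Suc k))" by (simp add: comp_assoc)
      also have "\<dots> = h 0 \<circ> ginv M (h (Suc k))" using ginv_left[of "h k" L M] hA Suc by simp
      finally show ?case .
    qed
  qed
  have "\<sigma> = gprod M \<tau> \<epsilon> n" using gp[of n] h0 hn ginv_id[of M] by (metis comp_id order_refl)
  moreover have "\<forall>k<n. \<tau> k \<in> A_set L M (\<pi> k) x y a"
  proof (intro allI impI)
    fix k assume k: "k < n"
    have ta: "tupok L M x (ginv M (h k) \<circ> a)" "tupok L M x (ginv M (h (Suc k)) \<circ> a)"
      using tupok_aut[OF gi a, of k] tupok_aut[OF gi a, of "Suc k"] k by auto
    have "\<forall>\<phi>\<in>\<pi> k. sat L M (asg2 x y (\<tau> k \<circ> a) a) \<phi>"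
    proof
      fix \<phi> assume p: "\<phi> \<in> \<pi> k"
      show "sat L M (asg2 x y (\<tau> k \<circ> a) a) \<phi>"
      proof (cases "\<epsilon> k = 1")
        case True
        then have s0: "sat L M (asg2 x y (ginv M (h (Suc k)) \<circ> a) (ginv M (h k) \<circ> a)) \<phi>"
          using hp k p unfolding prs_def by simp
        have "sat L M (asg2 x y (h k \<circ> (ginv M (h (Suc k)) \<circ> a)) (h k \<circ> (ginv M (h k) \<circ> a))) \<phi>"
          using tr[OF ta(2) ta(1) _ _ wf] s0 hA k fm p by simp
        moreover have "h k \<circ> (ginv M (h k) \<circ> a) = a" using ginv_right[of "h k" L M] hA k
          by (simp add: comp_assoc[symmetric])
        ultimately show ?thesis using True unfolding \<tau>_def by (simp add: comp_assoc)
      next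
        case False
        then have s0: "sat L M (asg2 x y (ginv M (h k) \<circ> a) (ginv M (h (Suc k)) \<circ> a)) \<phi>"
          using hp k p unfolding prs_def by simp
        have "sat L M (asg2 x y (h (Suc k) \<circ> (ginv M (h k) \<circ> a)) (h (Suc k) \<circ> (ginv M (h (Suc k)) \<circ> a))) \<phi>"
          using tr[OF ta(1) ta(2) _ _ wf] s0 hA k fm p by (simp add: Suc_leI)
        moreover have "h (Suc k) \<circ> (ginv M (h (Suc k)) \<circ> a) = a" using ginv_right[of "h (Suc k)" L M] hA k
          by (simp add: comp_assoc[symmetric] Suc_leI)
        ultimately show ?thesis using False unfolding \<tau>_def by (simp add: comp_assoc)
      qed
    qed
    then show "\<tau> k \<in> A_set L M (\<pi> k) x y a" using \<tau>A k by (simp add: A_set_def tup_asg_asg2)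
  qed
  ultimately show "\<sigma> \<in> setprods M (\<lambda>k. A_set L M (\<pi> k) x y a) \<epsilon> n"
    unfolding setprods_iff by blast
qed


unbundle cardinal_syntax

lemma lepoll_card_of: "A \<lesssim> B \<longleftrightarrow> |A| \<le>o |B|"
  unfolding lepoll_def using card_of_ordLeq by blast

lemma lesspoll_iff_not: "A \<prec> B \<longleftrightarrow> \<not> B \<lesssim> A"
proof
  assume "A \<prec> B"
  then show "\<not> B \<lesssim> A" unfolding lesspoll_def using lepoll_antisym by blast
next
  assume n: "\<not> B \<lesssim> A"
  then have "|A| <o |B|" unfolding lepoll_card_of using not_ordLeq_iff_ordLess
    by (metis card_of_Well_order)
  then have "A \<lesssim> B" unfolding lepoll_card_of using ordLess_imp_ordLeq by blast
  moreover have "\<not> A \<approx> B" using n eqpoll_sym eqpoll_imp_lepoll by blast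
  ultimately show "A \<prec> B" unfolding lesspoll_def by blast
qed

lemma lesspoll_card_of: "A \<prec> B \<longleftrightarrow> |A| <o |B|"
  unfolding lesspoll_iff_not lepoll_card_of
  by (metis card_of_Well_order not_ordLeq_iff_ordLess)

lemma Un_lesspoll: "infinite K \<Longrightarrow> A \<prec> K \<Longrightarrow> B \<prec> K \<Longrightarrow> A \<union> B \<prec> K"
  unfolding lesspoll_card_of using card_of_Un_ordLess_infinite by blast

lemma subset_lesspoll: "A \<subseteq> B \<Longrightarrow> B \<prec> K \<Longrightarrow> A \<prec> K"
  using subset_imp_lepoll lesspoll_trans1 by blast

lemma finite_Un_lesspoll: "infinite K \<Longrightarrow> A \<prec> K \<Longrightarrow> finite B \<Longrightarrow> A \<union> B \<prec> K"
  using Un_lesspoll finite_lesspoll_infinite by blast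

lemma lesspoll_not_superset: "A \<prec> K \<Longrightarrow> K \<lesssim> B \<Longrightarrow> \<not> B \<subseteq> A"
  using subset_imp_lepoll lepoll_trans lesspoll_iff_not by blast

lemma big_diff: "infinite K \<Longrightarrow> S \<prec> K \<Longrightarrow> K \<lesssim> V \<Longrightarrow> K \<lesssim> V - S"
proof (rule ccontr)
  assume i: "infinite K" and s: "S \<prec> K" and kv: "K \<lesssim> V" and n: "\<not> K \<lesssim> V - S"
  then have "V - S \<prec> K" using lesspoll_iff_not by blast
  then have "(V - S) \<union> S \<prec> K" using Un_lesspoll i s by blast
  then show False using lesspoll_not_superset kv by blast
qed


primrec vars :: "('f,'r,'v) fm \<Rightarrow> 'v set" where
  "vars (FEq t u) = fvt t \<union> fvt u"
| "vars (FRel r ts) = (\<Union>t\<in>set ts. fvt t)"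
| "vars (FNeg \<phi>) = vars \<phi>"
| "vars (FConj \<phi> \<psi>) = vars \<phi> \<union> vars \<psi>"
| "vars (FEx z \<phi>) = insert z (vars \<phi>)"

lemma finite_fvt: "finite (fvt t)"
proof (induction t)
  case (Var z) then show ?case by simp
next
  case (App f ts) then show ?case by simp
qed

lemma finite_vars: "finite (vars \<phi>)"
  by (induction \<phi>) (simp_all add: finite_fvt)

lemma fv_vars: "fv \<phi> \<subseteq> vars \<phi>"
  by (induction \<phi>) (simp_all, blast+)

lemma finite_fv: "finite (fv \<phi>)"
  by (rule finite_subset[OF fv_vars finite_vars])

primrec rent :: "('v \<Rightarrow> 'v) \<Rightarrow> ('f,'v) trm \<Rightarrow> ('f,'v) trm" where
  "rent \<rho> (Var z) = Var (\<rho> z)"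
| "rent \<rho> (App f ts) = App f (map (rent \<rho>) ts)"

primrec ren :: "('v \<Rightarrow> 'v) \<Rightarrow> ('f,'r,'v) fm \<Rightarrow> ('f,'r,'v) fm" where
  "ren \<rho> (FEq t u) = FEq (rent \<rho> t) (rent \<rho> u)"
| "ren \<rho> (FRel r ts) = FRel r (map (rent \<rho>) ts)"
| "ren \<rho> (FNeg \<phi>) = FNeg (ren \<rho> \<phi>)"
| "ren \<rho> (FConj \<phi> \<psi>) = FConj (ren \<rho> \<phi>) (ren \<rho> \<psi>)"
| "ren \<rho> (FEx z \<phi>) = FEx (\<rho> z) (ren \<rho> \<phi>)"

lemma eval_rent: "eval S v (rent \<rho> t) = eval S (v \<circ> \<rho>) t"
proof (induction t)
  case (Var z) then show ?case by simp
next
  case (App f ts)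
  have m: "map (eval S v \<circ> rent \<rho>) ts = map (eval S (v \<circ> \<rho>)) ts"
    using App by (auto simp: map_eq_conv comp_def)
  show ?case by (simp only: rent.simps eval.simps map_map m)
qed

lemma fvt_rent: "fvt (rent \<rho> t) = \<rho> ` fvt t"
proof (induction t)
  case (Var z) then show ?case by simp
next
  case (App f ts) then show ?case by (simp add: image_UN)
qed

lemma wt_rent: "wt L t s \<Longrightarrow> \<forall>z\<in>fvt t. vsort L (\<rho> z) = vsort L z \<Longrightarrow> wt L (rent \<rho> t) s"
proof (induction t s rule: wt.induct)
  case (1 z s) then show ?case by (auto intro: wt.intros)
next
  case (2 f ss s ts)
  have "list_all2 (wt L) (map (rent \<rho>) ts) ss"
    unfolding list_all2_conv_all_nth
  proof (intro conjI allI impI)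
    show "length (map (rent \<rho>) ts) = length ss" using 2(2) by (simp add: list_all2_conv_all_nth)
    fix i assume i: "i < length (map (rent \<rho>) ts)"
    then have "ts ! i \<in> set ts" by simp
    then have "\<forall>z\<in>fvt (ts!i). vsort L (\<rho> z) = vsort L z" using 2(3) by auto
    then show "wt L (map (rent \<rho>) ts ! i) (ss ! i)" using 2(2) i by (auto simp: list_all2_conv_all_nth)
  qed
  then show ?case using 2(1) by (auto intro: wt.intros)
qed

lemma wf_ren: "wf_fm L \<phi> \<Longrightarrow> \<forall>z\<in>vars \<phi>. vsort L (\<rho> z) = vsort L z \<Longrightarrow> wf_fm L (ren \<rho> \<phi>)"
proof (induction \<phi>)
  case (FEq t u)
  then obtain s where "wt L t s" "wt L u s" by auto
  then show ?case using FEq by (auto intro!: wt_rent)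
next
  case (FRel r ts)
  then show ?case by (auto simp: list_all2_conv_all_nth intro!: wt_rent)
qed auto

lemma fv_ren: "inj_on \<rho> (vars \<phi>) \<Longrightarrow> fv (ren \<rho> \<phi>) = \<rho> ` fv \<phi>"
proof (induction \<phi>)
  case (FEx z \<phi>)
  then have i: "inj_on \<rho> (insert z (vars \<phi>))" by simp
  then have "fv (ren \<rho> \<phi>) = \<rho> ` fv \<phi>" using FEx.IH inj_on_subset[OF _ subset_insertI] by blast
  moreover have "\<rho> ` (fv \<phi> - {z}) = \<rho> ` fv \<phi> - {\<rho> z}"
    using i fv_vars[of \<phi>] by (auto simp: inj_on_def)
  ultimately show ?case by simp
next
  case (FConj \<phi> \<psi>)
  have i1: "inj_on \<rho> (vars \<phi>)" "inj_on \<rho> (vars \<psi>)"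
    using FConj.prems(1) inj_on_subset[OF _ Un_upper1] inj_on_subset[OF _ Un_upper2] by auto
  then show ?case using FConj.IH by (simp add: image_Un)
qed (auto simp: fvt_rent)

lemma sat_ren:
  "inj_on \<rho> (vars \<phi>) \<Longrightarrow> \<forall>z\<in>vars \<phi>. vsort L (\<rho> z) = vsort L z \<Longrightarrow>
    sat L S v (ren \<rho> \<phi>) = sat L S (v \<circ> \<rho>) \<phi>"
proof (induction \<phi> arbitrary: v)
  case (FEq t u) then show ?case by (simp add: eval_rent comp_def)
next
  case (FRel r ts)
  have m: "map (eval S v \<circ> rent \<rho>) ts = map (eval S (v \<circ> \<rho>)) ts"
    by (auto simp: map_eq_conv eval_rent)
  show ?case by (simp only: ren.simps sat.simps map_map m)
next
  case (FNeg \<phi>) then show ?case by simp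
next
  case (FConj \<phi> \<psi>)
  have i1: "inj_on \<rho> (vars \<phi>)" "inj_on \<rho> (vars \<psi>)"
    using FConj.prems(1) inj_on_subset[OF _ Un_upper1] inj_on_subset[OF _ Un_upper2] by auto
  have "sat L S v (ren \<rho> \<phi>) = sat L S (v \<circ> \<rho>) \<phi>" using FConj.IH(1)[OF i1(1)] FConj.prems(2) by (simp add: comp_def)
  moreover have "sat L S v (ren \<rho> \<psi>) = sat L S (v \<circ> \<rho>) \<psi>" using FConj.IH(2)[OF i1(2)] FConj.prems(2) by (simp add: comp_def)
  ultimately show ?case by (simp add: comp_def)
next
  case (FEx z \<phi>)
  have i: "inj_on \<rho> (insert z (vars \<phi>))" using FEx by simp
  have i1: "inj_on \<rho> (vars \<phi>)" using i inj_on_subset[OF _ subset_insertI] by blast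
  have "\<And>b. sat L S (v(\<rho> z := b)) (ren \<rho> \<phi>) = sat L S ((v(\<rho> z := b)) \<circ> \<rho>) \<phi>"
    using FEx.IH[OF i1] FEx.prems(2) by (simp add: comp_def)
  moreover have "\<And>b. sat L S ((v(\<rho> z := b)) \<circ> \<rho>) \<phi> = sat L S ((v \<circ> \<rho>)(z := b)) \<phi>"
  proof (rule sat_cong, intro ballI)
    fix b w assume w: "w \<in> fv \<phi>"
    then have "w \<in> vars \<phi>" using fv_vars[of \<phi>] by (rule subsetD[rotated])
    then show "((v(\<rho> z := b)) \<circ> \<rho>) w = ((v \<circ> \<rho>)(z := b)) w"
      using i by (cases "w = z") (auto simp: inj_on_def)
  qed
  moreover have "vsort L (\<rho> z) = vsort L z" using FEx by simp
  ultimately show ?case by (simp add: comp_def)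
qed


definition exl :: "'v list \<Rightarrow> ('f,'r,'v) fm \<Rightarrow> ('f,'r,'v) fm" where
  "exl zs \<phi> = foldr FEx zs \<phi>"

lemma fv_exl: "fv (exl zs \<phi>) = fv \<phi> - set zs"
  unfolding exl_def by (induction zs) auto

lemma wf_exl: "wf_fm L (exl zs \<phi>) = wf_fm L \<phi>"
  unfolding exl_def by (induction zs) auto

lemma sat_exl: "sat L S v (exl zs \<phi>) \<longleftrightarrow>
   (\<exists>v'. (\<forall>w. w \<notin> set zs \<longrightarrow> v' w = v w) \<and> okv L S (set zs) v' \<and> sat L S v' \<phi>)"
proof (induction zs arbitrary: v)
  case Nil
  show ?case by (auto simp: exl_def okv_def fun_eq_iff[symmetric])
next
  case (Cons z zs)
  have e: "exl (z # zs) \<phi> = FEx z (exl zs \<phi>)" by (simp add: exl_def)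
  show ?case
  proof
    assume "sat L S v (exl (z # zs) \<phi>)"
    then obtain b where b: "b \<in> carr S" "esort S b = vsort L z" "sat L S (v(z:=b)) (exl zs \<phi>)"
      using e by auto
    then obtain v' where v': "\<forall>w. w \<notin> set zs \<longrightarrow> v' w = (v(z:=b)) w" "okv L S (set zs) v'" "sat L S v' \<phi>"
      using Cons by blast
    have "okv L S (set (z # zs)) v'" using v' b unfolding okv_def by (cases "z \<in> set zs") auto
    moreover have "\<forall>w. w \<notin> set (z#zs) \<longrightarrow> v' w = v w" using v' by auto
    ultimately show "\<exists>v'. (\<forall>w. w \<notin> set (z#zs) \<longrightarrow> v' w = v w) \<and> okv L S (set (z#zs)) v' \<and> sat L S v' \<phi>"
      using v' by blast
  next
    assume "\<exists>v'. (\<forall>w. w \<notin> set (z#zs) \<longrightarrow> v' w = v w) \<and> okv L S (set (z#zs)) v' \<and> sat L S v' \<phi>"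
    then obtain v' where v': "\<forall>w. w \<notin> set (z#zs) \<longrightarrow> v' w = v w" "okv L S (set (z#zs)) v'" "sat L S v' \<phi>"
      by blast
    have "\<forall>w. w \<notin> set zs \<longrightarrow> v' w = (v(z := v' z)) w" using v' by auto
    moreover have "okv L S (set zs) v'" using v' by (auto simp: okv_def)
    ultimately have "sat L S (v(z := v' z)) (exl zs \<phi>)" using Cons v' by blast
    moreover have "v' z \<in> carr S" "esort S (v' z) = vsort L z" using v' by (auto simp: okv_def)
    ultimately show "sat L S v (exl (z # zs) \<phi>)" using e by auto
  qed
qed

definition ttrue :: "('f,'r,'v) fm" where
  "ttrue = FEx undefined (FEq (Var undefined) (Var undefined))"

fun conjl :: "('f,'r,'v) fm list \<Rightarrow> ('f,'r,'v) fm" where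
  "conjl [] = ttrue"
| "conjl (\<phi> # \<phi>s) = FConj \<phi> (conjl \<phi>s)"

lemma fv_conjl: "fv (conjl \<phi>s) = (\<Union>\<phi>\<in>set \<phi>s. fv \<phi>)"
  by (induction \<phi>s) (auto simp: ttrue_def)

lemma wf_conjl: "wf_fm L (conjl \<phi>s) \<longleftrightarrow> (\<forall>\<phi>\<in>set \<phi>s. wf_fm L \<phi>)"
  by (induction \<phi>s) (auto simp: ttrue_def intro: wt.intros)

lemma sat_conjl: "wf_struc L S \<Longrightarrow> sat L S v (conjl \<phi>s) \<longleftrightarrow> (\<forall>\<phi>\<in>set \<phi>s. sat L S v \<phi>)"
  by (induction \<phi>s) (auto simp: ttrue_def wf_struc_def)


definition lst :: "'x set \<Rightarrow> 'x list" where
  "lst S = (SOME xs. set xs = S)"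

lemma set_lst: "finite S \<Longrightarrow> set (lst S) = S"
  unfolding lst_def by (rule someI_ex[OF finite_list])

lemma chain_finite_max:
  assumes "finite X" "X \<noteq> {}" "X \<subseteq> C" "chain\<^sub>\<subseteq> C"
  shows "\<exists>G\<in>X. \<forall>G'\<in>X. G' \<subseteq> G"
  using assms
proof (induction X rule: finite_ne_induct)
  case (singleton x) then show ?case by auto
next
  case (insert x F)
  then obtain G where G: "G \<in> F" "\<forall>G'\<in>F. G' \<subseteq> G" by auto
  have "x \<subseteq> G \<or> G \<subseteq> x" using insert(5,6) G(1) unfolding chain_subset_def by auto
  then show ?case
  proof
    assume "x \<subseteq> G" then show ?thesis using G by auto
  next
    assume "G \<subseteq> x" then show ?thesis using G by auto
  qed
qed

definition consg :: "('s,'f,'r,'v) lang \<Rightarrow> ('s,'f,'r,'a) struc \<Rightarrow> 'v set \<Rightarrow> ('v \<Rightarrow> 'a)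
   \<Rightarrow> ('c \<Rightarrow> ('f,'r,'v) fm) \<Rightarrow> 'c set \<Rightarrow> ('v \<times> 'a) set \<Rightarrow> bool" where
  "consg L M W e0 \<Phi> J G \<longleftrightarrow> (\<forall>J0. J0 \<subseteq> J \<and> finite J0 \<longrightarrow>
     (\<exists>v. okv L M W v \<and> (\<forall>w. w \<notin> W \<longrightarrow> v w = e0 w) \<and> (\<forall>p\<in>G. v (fst p) = snd p) \<and>
          (\<forall>j\<in>J0. sat L M v (\<Phi> j))))"

definition svg :: "('v \<times> 'a) set \<Rightarrow> bool" where
  "svg G \<longleftrightarrow> (\<forall>w b b'. (w,b) \<in> G \<longrightarrow> (w,b') \<in> G \<longrightarrow> b = b')"

lemma consg_ok:
  assumes "consg L M W e0 \<Phi> J G" "(w,b) \<in> G" "fst ` G \<subseteq> W"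
  shows "b \<in> carr M \<and> esort M b = vsort L w"
proof -
  have "\<exists>v. okv L M W v \<and> (\<forall>w. w \<notin> W \<longrightarrow> v w = e0 w) \<and> (\<forall>p\<in>G. v (fst p) = snd p) \<and>
          (\<forall>j\<in>{}. sat L M v (\<Phi> j))"
    using assms(1) unfolding consg_def by blast
  then obtain v where v: "okv L M W v" "\<forall>p\<in>G. v (fst p) = snd p" by blast
  have "w \<in> W" using assms(2,3) by force
  then show ?thesis using v assms(2) unfolding okv_def by force
qed

lemma chain_union:
  assumes C: "C \<in> chains {G. fst ` G \<subseteq> W \<and> svg G \<and> consg L M W e0 \<Phi> J G}"
    and base: "consg L M W e0 \<Phi> J {}"
    and fvfin: "\<forall>j. finite (fv (\<Phi> j))"
  shows "\<Union>C \<in> {G. fst ` G \<subseteq> W \<and> svg G \<and> consg L M W e0 \<Phi> J G}"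
proof (cases "C = {}")
  case True then show ?thesis using base by (simp add: svg_def)
next
  case False
  have CA: "\<And>G. G \<in> C \<Longrightarrow> fst ` G \<subseteq> W \<and> svg G \<and> consg L M W e0 \<Phi> J G"
    using C unfolding chains_def by blast
  have ch: "chain\<^sub>\<subseteq> C" using C unfolding chains_def by blast
  have dom: "fst ` \<Union>C \<subseteq> W" using CA by blast
  have sv: "svg (\<Union>C)"
    unfolding svg_def
  proof (intro allI impI)
    fix w b b' assume "(w,b) \<in> \<Union>C" "(w,b') \<in> \<Union>C"
    then obtain G1 G2 where G: "G1 \<in> C" "G2 \<in> C" "(w,b) \<in> G1" "(w,b') \<in> G2" by blast
    have "G1 \<subseteq> G2 \<or> G2 \<subseteq> G1" using ch G unfolding chain_subset_def by blast
    then show "b = b'" using G CA[of G1] CA[of G2] unfolding svg_def by blast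
  qed
  have cons: "consg L M W e0 \<Phi> J (\<Union>C)"
    unfolding consg_def
  proof (intro allI impI)
    fix J0 assume J0: "J0 \<subseteq> J \<and> finite J0"
    define F where "F = (\<Union>j\<in>J0. fv (\<Phi> j))"
    have fF: "finite F" unfolding F_def using J0 fvfin by auto
    define D where "D = F \<inter> fst ` \<Union>C"
    have fD: "finite D" unfolding D_def using fF by simp
    have "\<forall>w\<in>D. \<exists>G\<in>C. w \<in> fst ` G" unfolding D_def by blast
    then obtain Gw where Gw: "\<And>w. w \<in> D \<Longrightarrow> Gw w \<in> C \<and> w \<in> fst ` Gw w" by metis
    obtain G1 where G1: "G1 \<in> C" using False by blast
    define X where "X = insert G1 (Gw ` D)"
    have X: "finite X" "X \<noteq> {}" "X \<subseteq> C" unfolding X_def using fD G1 Gw by auto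
    obtain G0 where G0: "G0 \<in> X" "\<forall>G'\<in>X. G' \<subseteq> G0" using chain_finite_max[OF X ch] by blast
    have G0C: "G0 \<in> C" using G0 \<open>X \<subseteq> C\<close> by blast
    have DG0: "\<And>w. w \<in> D \<Longrightarrow> w \<in> fst ` G0"
    proof -
      fix w assume w: "w \<in> D"
      then have "Gw w \<in> X" unfolding X_def by blast
      then have "Gw w \<subseteq> G0" using G0(2) by blast
      then show "w \<in> fst ` G0" using Gw[OF w] by blast
    qed
    obtain v0 where v0: "okv L M W v0" "\<forall>w. w \<notin> W \<longrightarrow> v0 w = e0 w" "\<forall>p\<in>G0. v0 (fst p) = snd p"
      "\<forall>j\<in>J0. sat L M v0 (\<Phi> j)"
      using CA[OF G0C, THEN conjunct2, THEN conjunct2, unfolded consg_def, rule_format, OF J0] by blast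
    define g where "g w = (THE b. (w,b) \<in> \<Union>C)" for w
    have gw: "\<And>w b. (w,b) \<in> \<Union>C \<Longrightarrow> g w = b"
    proof -
      fix w b assume wb: "(w,b) \<in> \<Union>C"
      show "g w = b" unfolding g_def
        by (rule the_equality) (use wb sv in \<open>auto simp: svg_def\<close>)
    qed
    define v where "v w = (if w \<in> fst ` \<Union>C then g w else v0 w)" for w
    have "okv L M W v"
      unfolding okv_def
    proof
      fix w assume w: "w \<in> W"
      show "v w \<in> carr M \<and> esort M (v w) = vsort L w"
      proof (cases "w \<in> fst ` \<Union>C")
        case True
        then obtain b G where bG: "(w,b) \<in> G" "G \<in> C" by force
        then show ?thesis using consg_ok[of L M W e0 \<Phi> J G w b] CA[OF bG(2)] gw[of w b] v_def True by auto
      next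
        case False then show ?thesis using v0(1) w v_def unfolding okv_def by auto
      qed
    qed
    moreover have "\<forall>w. w \<notin> W \<longrightarrow> v w = e0 w" using dom v0(2) v_def by auto
    moreover have "\<forall>p\<in>\<Union>C. v (fst p) = snd p" using gw v_def by force
    moreover have "\<forall>j\<in>J0. sat L M v (\<Phi> j)"
    proof
      fix j assume j: "j \<in> J0"
      have "sat L M v (\<Phi> j) = sat L M v0 (\<Phi> j)"
      proof (rule sat_cong, intro ballI)
        fix w assume w: "w \<in> fv (\<Phi> j)"
        show "v w = v0 w"
        proof (cases "w \<in> fst ` \<Union>C")
          case True
          then have "w \<in> D" using w j unfolding D_def F_def by blast
          then obtain b where "(w,b) \<in> G0" using DG0 by force
          then show ?thesis using True v_def gw[of w b] v0(3) G0C by force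
        next
          case False then show ?thesis using v_def by simp
        qed
      qed
      then show "sat L M v (\<Phi> j)" using v0(4) j by simp
    qed
    ultimately show "\<exists>v. okv L M W v \<and> (\<forall>w. w \<notin> W \<longrightarrow> v w = e0 w) \<and> (\<forall>p\<in>\<Union>C. v (fst p) = snd p) \<and>
          (\<forall>j\<in>J0. sat L M v (\<Phi> j))" by blast
  qed
  show ?thesis using dom sv cons by blast
qed


lemma realize:
  fixes \<Phi> :: "'c \<Rightarrow> ('f,'r,'v) fm" and K :: "'k set" and M :: "('s,'f,'r,'a) struc"
  assumes satd: "saturated L M K" and wf: "wf_struc L M" and inf: "infinite K"
    and small: "V \<prec> K" and WV: "W \<subseteq> V"
    and fvs: "\<forall>j\<in>J. wf_fm L (\<Phi> j) \<and> fv (\<Phi> j) \<subseteq> V"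
    and e0: "okv L M (V - W) e0"
    and fin: "\<forall>J0. J0 \<subseteq> J \<and> finite J0 \<longrightarrow>
       (\<exists>v. okv L M W v \<and> (\<forall>w. w \<notin> W \<longrightarrow> v w = e0 w) \<and> (\<forall>j\<in>J0. sat L M v (\<Phi> j)))"
  shows "\<exists>v. okv L M W v \<and> (\<forall>w. w \<notin> W \<longrightarrow> v w = e0 w) \<and> (\<forall>j\<in>J. sat L M v (\<Phi> j))"
proof -
  define \<A> where "\<A> = {G. fst ` G \<subseteq> W \<and> svg G \<and> consg L M W e0 \<Phi> J G}"
  have base: "consg L M W e0 \<Phi> J {}" unfolding consg_def using fin by simp
  have fvfin: "\<forall>j. finite (fv (\<Phi> j))" using finite_fv by blast
  have "\<forall>C\<in>chains \<A>. \<Union>C \<in> \<A>" unfolding \<A>_def using chain_union[OF _ base fvfin] by blast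
  then obtain Gm where Gm: "Gm \<in> \<A>" and maxi: "\<forall>X\<in>\<A>. Gm \<subseteq> X \<longrightarrow> X = Gm"
    using Zorn_Lemma[of \<A>] by blast
  have GmW: "fst ` Gm \<subseteq> W" and Gmsv: "svg Gm" and Gmc: "consg L M W e0 \<Phi> J Gm"
    using Gm unfolding \<A>_def by auto
  define D where "D = fst ` Gm"
  define g where "g w = (THE b. (w,b) \<in> Gm)" for w
  have gw: "\<And>w b. (w,b) \<in> Gm \<Longrightarrow> g w = b"
  proof -
    fix w b assume wb: "(w,b) \<in> Gm"
    show "g w = b" unfolding g_def
      by (rule the_equality) (use wb Gmsv in \<open>auto simp: svg_def\<close>)
  qed
  have gD: "\<And>w. w \<in> D \<Longrightarrow> (w, g w) \<in> Gm"
  proof -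
    fix w assume "w \<in> D"
    then obtain b where "(w,b) \<in> Gm" unfolding D_def by force
    then show "(w, g w) \<in> Gm" using gw by simp
  qed
  have gok: "\<And>w. w \<in> D \<Longrightarrow> g w \<in> carr M \<and> esort M (g w) = vsort L w"
    using consg_ok[OF Gmc _ GmW] gD by blast
  obtain vany where vany: "okv L M W vany"
    using Gmc[unfolded consg_def, rule_format, of "{}"] by auto
  have WD: "W \<subseteq> D"
  proof (rule ccontr)
    assume "\<not> W \<subseteq> D"
    then obtain w0 where w0: "w0 \<in> W" "w0 \<notin> D" by blast
    define e where "e w = (if w \<in> D then g w else e0 w)" for w
    define B where "B = e0 ` (V - W) \<union> snd ` Gm"
    have Bc: "B \<subseteq> carr M"
    proof
      fix b assume "b \<in> B"
      then consider (a) w where "w \<in> V - W" "b = e0 w" | (b) w where "(w,b) \<in> Gm"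
        unfolding B_def by force
      then show "b \<in> carr M"
      proof cases
        case a then show ?thesis using e0 unfolding okv_def by blast
      next
        case b then show ?thesis using consg_ok[OF Gmc _ GmW] by blast
      qed
    qed
    have Bs: "B \<prec> K"
    proof -
      have "e0 ` (V - W) \<lesssim> V" using image_lepoll subset_imp_lepoll lepoll_trans
        by (metis Diff_subset)
      then have 1: "e0 ` (V - W) \<prec> K" using small lesspoll_trans1 by blast
      have "inj_on fst Gm" using Gmsv unfolding svg_def inj_on_def by force
      then have "Gm \<lesssim> fst ` Gm" unfolding lepoll_def by blast
      also have "fst ` Gm \<lesssim> V" using GmW WV subset_imp_lepoll by (metis order_trans)
      finally have "snd ` Gm \<lesssim> V" using image_lepoll lepoll_trans by blast
      then have 2: "snd ` Gm \<prec> K" using small lesspoll_trans1 by blast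
      show ?thesis unfolding B_def using Un_lesspoll[OF inf 1 2] .
    qed
    define R where "R J0 = (\<Union>j\<in>J0. fv (\<Phi> j)) \<inter> (W - D - {w0})" for J0
    define \<chi> where "\<chi> J0 = exl (lst (R J0)) (conjl (lst (\<Phi> ` J0)))" for J0
    have finR: "\<And>J0. finite J0 \<Longrightarrow> finite (R J0)" unfolding R_def using fvfin by blast
    have fv\<chi>: "\<And>J0. finite J0 \<Longrightarrow> fv (\<chi> J0) = (\<Union>j\<in>J0. fv (\<Phi> j)) - R J0"
      unfolding \<chi>_def by (simp add: fv_exl set_lst finR fv_conjl)
    have sat\<chi>: "\<And>J0 u. finite J0 \<Longrightarrow> sat L M u (\<chi> J0) \<longleftrightarrow>
        (\<exists>v'. (\<forall>w. w \<notin> R J0 \<longrightarrow> v' w = u w) \<and> okv L M (R J0) v' \<and> (\<forall>j\<in>J0. sat L M v' (\<Phi> j)))"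
      unfolding \<chi>_def by (simp add: sat_exl set_lst finR sat_conjl[OF wf])
    define \<Psi> where "\<Psi> = {\<chi> J0 | J0. J0 \<subseteq> J \<and> finite J0}"
    have cond1: "\<forall>\<psi>\<in>\<Psi>. wf_fm L \<psi> \<and> (\<forall>w\<in>fv \<psi> - {w0}. e w \<in> B \<and> esort M (e w) = vsort L w)"
    proof
      fix \<psi> assume "\<psi> \<in> \<Psi>"
      then obtain J0 where J0: "\<psi> = \<chi> J0" "J0 \<subseteq> J" "finite J0" unfolding \<Psi>_def by blast
      have "wf_fm L \<psi>" unfolding J0(1) \<chi>_def wf_exl wf_conjl using J0 fvs
        by (simp add: set_lst) blast
      moreover have "\<forall>w\<in>fv \<psi> - {w0}. e w \<in> B \<and> esort M (e w) = vsort L w"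
      proof
        fix w assume w: "w \<in> fv \<psi> - {w0}"
        then obtain j where j: "j \<in> J0" "w \<in> fv (\<Phi> j)" "w \<notin> R J0" using fv\<chi>[OF J0(3)] J0(1) by blast
        have wV: "w \<in> V" using j J0 fvs by blast
        show "e w \<in> B \<and> esort M (e w) = vsort L w"
        proof (cases "w \<in> D")
          case True
          then show ?thesis using gD gok e_def unfolding B_def by force
        next
          case False
          then have "w \<notin> W" using j w unfolding R_def by blast
          then show ?thesis using False e0 wV e_def unfolding B_def okv_def by auto
        qed
      qed
      ultimately show "wf_fm L \<psi> \<and> (\<forall>w\<in>fv \<psi> - {w0}. e w \<in> B \<and> esort M (e w) = vsort L w)" by blast
    qed
    have cond2: "\<forall>\<Psi>0. \<Psi>0 \<subseteq> \<Psi> \<and> finite \<Psi>0 \<longrightarrow>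
        (\<exists>b\<in>carr M. esort M b = vsort L w0 \<and> (\<forall>\<psi>\<in>\<Psi>0. sat L M (e(w0 := b)) \<psi>))"
    proof (intro allI impI)
      fix \<Psi>0 assume P0: "\<Psi>0 \<subseteq> \<Psi> \<and> finite \<Psi>0"
      have "\<forall>\<psi>\<in>\<Psi>0. \<exists>J0. \<psi> = \<chi> J0 \<and> J0 \<subseteq> J \<and> finite J0" using P0 unfolding \<Psi>_def by blast
      then obtain JJ where JJ: "\<And>\<psi>. \<psi> \<in> \<Psi>0 \<Longrightarrow> \<psi> = \<chi> (JJ \<psi>) \<and> JJ \<psi> \<subseteq> J \<and> finite (JJ \<psi>)" by metis
      define J1 where "J1 = (\<Union>\<psi>\<in>\<Psi>0. JJ \<psi>)"
      have J1: "J1 \<subseteq> J" "finite J1" unfolding J1_def using JJ P0 by auto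
      obtain v where v: "okv L M W v" "\<forall>w. w \<notin> W \<longrightarrow> v w = e0 w" "\<forall>p\<in>Gm. v (fst p) = snd p"
        "\<forall>j\<in>J1. sat L M v (\<Phi> j)"
        using Gmc[unfolded consg_def, rule_format, of J1] J1 by blast
      define b where "b = v w0"
      have b: "b \<in> carr M" "esort M b = vsort L w0" using v(1) w0(1) unfolding okv_def b_def by auto
      have "\<forall>\<psi>\<in>\<Psi>0. sat L M (e(w0 := b)) \<psi>"
      proof
        fix \<psi> assume p: "\<psi> \<in> \<Psi>0"
        define J0 where "J0 = JJ \<psi>"
        have J0: "\<psi> = \<chi> J0" "J0 \<subseteq> J1" "finite J0" using JJ[OF p] unfolding J0_def J1_def using p by auto
        define v' where "v' w = (if w \<in> R J0 then v w else (e(w0 := b)) w)" for w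
        have "\<forall>w. w \<notin> R J0 \<longrightarrow> v' w = (e(w0 := b)) w" unfolding v'_def by simp
        moreover have "okv L M (R J0) v'" using v(1) unfolding okv_def v'_def R_def by auto
        moreover have "\<forall>j\<in>J0. sat L M v' (\<Phi> j)"
        proof
          fix j assume j: "j \<in> J0"
          have "sat L M v' (\<Phi> j) = sat L M v (\<Phi> j)"
          proof (rule sat_cong, intro ballI)
            fix w assume w: "w \<in> fv (\<Phi> j)"
            show "v' w = v w"
            proof (cases "w \<in> R J0")
              case True then show ?thesis unfolding v'_def by simp
            next
              case nR: False
              show ?thesis
              proof (cases "w = w0")
                case True then show ?thesis using nR unfolding v'_def b_def by simp
              next
                case nw0: False
                show ?thesis
                proof (cases "w \<in> D")
                  case True
                  then show ?thesis using nR nw0 gD v(3) unfolding v'_def e_def by force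
                next
                  case False
                  then have "w \<notin> W" using nR nw0 w j unfolding R_def by blast
                  then show ?thesis using nR nw0 False v(2) unfolding v'_def e_def by simp
                qed
              qed
            qed
          qed
          then show "sat L M v' (\<Phi> j)" using v(4) j J0(2) by blast
        qed
        ultimately show "sat L M (e(w0 := b)) \<psi>" using sat\<chi>[OF J0(3)] J0(1) by blast
      qed
      then show "\<exists>b\<in>carr M. esort M b = vsort L w0 \<and> (\<forall>\<psi>\<in>\<Psi>0. sat L M (e(w0 := b)) \<psi>)"
        using b by blast
    qed
    obtain b where b: "b \<in> carr M" "esort M b = vsort L w0" "\<forall>\<psi>\<in>\<Psi>. sat L M (e(w0 := b)) \<psi>"
    proof -
      have "B \<subseteq> carr M \<and> B \<prec> K \<and>
       (\<forall>\<phi>\<in>\<Psi>. wf_fm L \<phi> \<and> (\<forall>w\<in>fv \<phi> - {w0}. e w \<in> B \<and> esort M (e w) = vsort L w)) \<and>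
       (\<forall>\<Phi>0. \<Phi>0 \<subseteq> \<Psi> \<and> finite \<Phi>0 \<longrightarrow>
          (\<exists>b\<in>carr M. esort M b = vsort L w0 \<and> (\<forall>\<phi>\<in>\<Phi>0. sat L M (e(w0 := b)) \<phi>)))"
        using Bc Bs cond1 cond2 by (intro conjI)
      from satd[unfolded saturated_def, rule_format, OF this] show ?thesis using that by blast
    qed
    define Gm' where "Gm' = insert (w0, b) Gm"
    have "Gm' \<in> \<A>"
    proof -
      have "fst ` Gm' \<subseteq> W" using GmW w0 unfolding Gm'_def by auto
      moreover have "svg Gm'" unfolding svg_def
      proof (intro allI impI)
        fix w c c' assume c: "(w,c) \<in> Gm'" "(w,c') \<in> Gm'"
        show "c = c'"
        proof (cases "w = w0")
          case True
          then have "(w,c) \<notin> Gm" "(w,c') \<notin> Gm" using w0(2) unfolding D_def by force+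
          then show ?thesis using c unfolding Gm'_def by simp
        next
          case False
          then have "(w,c) \<in> Gm" "(w,c') \<in> Gm" using c unfolding Gm'_def by auto
          then show ?thesis using Gmsv unfolding svg_def by blast
        qed
      qed
      moreover have "consg L M W e0 \<Phi> J Gm'"
        unfolding consg_def
      proof (intro allI impI)
        fix J0 assume J0: "J0 \<subseteq> J \<and> finite J0"
        then have "\<chi> J0 \<in> \<Psi>" unfolding \<Psi>_def by blast
        then have "sat L M (e(w0 := b)) (\<chi> J0)" using b(3) by blast
        then obtain v' where v': "\<forall>w. w \<notin> R J0 \<longrightarrow> v' w = (e(w0 := b)) w" "okv L M (R J0) v'"
          "\<forall>j\<in>J0. sat L M v' (\<Phi> j)" using sat\<chi> J0 by blast
        define v'' where "v'' w = (if w \<in> W - D - {w0} - R J0 then vany w else v' w)" for w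
        have "okv L M W v''"
          unfolding okv_def
        proof
          fix w assume w: "w \<in> W"
          show "v'' w \<in> carr M \<and> esort M (v'' w) = vsort L w"
          proof (cases "w \<in> W - D - {w0} - R J0")
            case True then show ?thesis using vany w unfolding v''_def okv_def by auto
          next
            case False
            then consider "w \<in> R J0" | "w \<notin> R J0" "w = w0" | "w \<notin> R J0" "w \<noteq> w0" "w \<in> D"
              using w by blast
            then show ?thesis
            proof cases
              case 1 then show ?thesis using v'(2) False unfolding v''_def okv_def by auto
            next
              case 2 then show ?thesis using v'(1) b False unfolding v''_def by auto
            next
              case 3 then show ?thesis using v'(1) gok False unfolding v''_def e_def by auto
            qed
          qed
        qed
        moreover have "\<forall>w. w \<notin> W \<longrightarrow> v'' w = e0 w"
        proof (intro allI impI)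
          fix w assume w: "w \<notin> W"
          then have "w \<notin> D" "w \<noteq> w0" "w \<notin> R J0" using GmW w0 unfolding D_def R_def by auto
          then show "v'' w = e0 w" using v'(1) w unfolding v''_def e_def by simp
        qed
        moreover have "\<forall>p\<in>Gm'. v'' (fst p) = snd p"
        proof
          fix p assume p: "p \<in> Gm'"
          show "v'' (fst p) = snd p"
          proof (cases "p = (w0, b)")
            case True
            have "w0 \<notin> R J0" unfolding R_def by blast
            then show ?thesis using True v'(1) unfolding v''_def by simp
          next
            case False
            then have pG: "p \<in> Gm" using p unfolding Gm'_def by blast
            then have "fst p \<in> D" "fst p \<noteq> w0" using w0(2) unfolding D_def by auto
            moreover have "fst p \<notin> R J0" using \<open>fst p \<in> D\<close> unfolding R_def by blast
            ultimately show ?thesis using v'(1) gw[of "fst p" "snd p"] pG unfolding v''_def e_def by simp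
          qed
        qed
        moreover have "\<forall>j\<in>J0. sat L M v'' (\<Phi> j)"
        proof
          fix j assume j: "j \<in> J0"
          have "sat L M v'' (\<Phi> j) = sat L M v' (\<Phi> j)"
          proof (rule sat_cong, intro ballI)
            fix w assume w: "w \<in> fv (\<Phi> j)"
            then have "w \<notin> W - D - {w0} - R J0" using j unfolding R_def by blast
            then show "v'' w = v' w" unfolding v''_def by (rule if_not_P)
          qed
          then show "sat L M v'' (\<Phi> j)" using v'(3) j by simp
        qed
        ultimately show "\<exists>v. okv L M W v \<and> (\<forall>w. w \<notin> W \<longrightarrow> v w = e0 w) \<and>
            (\<forall>p\<in>Gm'. v (fst p) = snd p) \<and> (\<forall>j\<in>J0. sat L M v (\<Phi> j))" by blast
      qed
      ultimately show ?thesis unfolding \<A>_def by blast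
    qed
    moreover have "Gm \<subseteq> Gm'" unfolding Gm'_def by blast
    moreover have "Gm' \<noteq> Gm" using w0(2) unfolding Gm'_def D_def by force
    ultimately show False using maxi by blast
  qed
  define vf where "vf w = (if w \<in> W then g w else e0 w)" for w
  have "okv L M W vf" using gok WD unfolding okv_def vf_def by auto
  moreover have "\<forall>w. w \<notin> W \<longrightarrow> vf w = e0 w" unfolding vf_def by simp
  moreover have "\<forall>j\<in>J. sat L M vf (\<Phi> j)"
  proof
    fix j assume j: "j \<in> J"
    obtain v where v: "\<forall>w. w \<notin> W \<longrightarrow> v w = e0 w" "\<forall>p\<in>Gm. v (fst p) = snd p"
        "\<forall>j'\<in>{j}. sat L M v (\<Phi> j')"
      using Gmc[unfolded consg_def, rule_format, of "{j}"] j by blast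
    have "v = vf"
    proof
      fix w show "v w = vf w"
      proof (cases "w \<in> W")
        case True
        then have "(w, g w) \<in> Gm" using WD gD by blast
        then show ?thesis using v(2) True unfolding vf_def by force
      next
        case False then show ?thesis using v(1) unfolding vf_def by simp
      qed
    qed
    then show "sat L M vf (\<Phi> j)" using v(3) by simp
  qed
  ultimately show ?thesis by blast
qed


lemma fresh_var:
  assumes "K \<lesssim> {z. vsort L z = s}" "S \<prec> K"
  shows "\<exists>z. vsort L z = s \<and> z \<notin> S"
proof -
  have "\<not> {z. vsort L z = s} \<subseteq> S" using lesspoll_not_superset[OF assms(2,1)] .
  then show ?thesis by blast
qed

lemma fresh_inj:
  assumes fin: "finite F" and S: "S \<prec> K" and inf: "infinite K"
    and sorts: "\<forall>s. K \<lesssim> {z. vsort L z = s}"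
  shows "\<exists>\<rho>. inj_on \<rho> F \<and> \<rho> ` F \<inter> S = {} \<and> (\<forall>z\<in>F. vsort L (\<rho> z) = vsort L z)"
  using fin
proof (induction F rule: finite_induct)
  case empty then show ?case by simp
next
  case (insert x F)
  then obtain \<rho> where \<rho>: "inj_on \<rho> F" "\<rho> ` F \<inter> S = {}" "\<forall>z\<in>F. vsort L (\<rho> z) = vsort L z" by blast
  have "S \<union> \<rho> ` F \<prec> K" using finite_Un_lesspoll[OF inf S finite_imageI[OF insert(1)]] .
  then obtain z where z: "vsort L z = vsort L x" "z \<notin> S \<union> \<rho> ` F"
    using fresh_var[of K L "vsort L x", OF _ \<open>S \<union> \<rho> ` F \<prec> K\<close>] sorts by blast
  define \<rho>' where "\<rho>' = \<rho>(x := z)"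
  have "inj_on \<rho>' (insert x F)"
  proof -
    have "inj_on \<rho>' F" using \<rho>(1) insert(2) unfolding \<rho>'_def inj_on_def by auto
    moreover have "\<rho>' x \<notin> \<rho>' ` F" using z insert(2) unfolding \<rho>'_def by auto
    moreover have "F - {x} = F" using insert(2) by blast
    ultimately show ?thesis by simp
  qed
  moreover have "\<rho>' ` insert x F \<inter> S = {}" using \<rho>(2) z insert(2) unfolding \<rho>'_def by auto
  moreover have "\<forall>w\<in>insert x F. vsort L (\<rho>' w) = vsort L w" using \<rho>(3) z insert(2) unfolding \<rho>'_def by auto
  ultimately show ?case by blast
qed

lemma ext_ren:
  assumes fin: "finite F" and S: "S \<prec> K" and inf: "infinite K"
    and sorts: "\<forall>s. K \<lesssim> {z. vsort L z = s}"
    and t0: "inj_on t0 P" "t0 ` P \<subseteq> S" "\<forall>z\<in>P. vsort L (t0 z) = vsort L z"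
  shows "\<exists>\<rho>. (\<forall>z\<in>P. \<rho> z = t0 z) \<and> inj_on \<rho> F \<and> (\<forall>z\<in>F. vsort L (\<rho> z) = vsort L z)"
proof -
  obtain \<rho>1 where r1: "inj_on \<rho>1 (F - P)" "\<rho>1 ` (F - P) \<inter> S = {}"
    "\<forall>z\<in>F - P. vsort L (\<rho>1 z) = vsort L z"
    using fresh_inj[OF _ S inf sorts, of "F - P"] fin by blast
  define \<rho> where "\<rho> z = (if z \<in> P then t0 z else \<rho>1 z)" for z
  have "inj_on \<rho> F"
    unfolding inj_on_def
  proof (intro ballI impI)
    fix z z' assume zz: "z \<in> F" "z' \<in> F" "\<rho> z = \<rho> z'"
    show "z = z'"
    proof (cases "z \<in> P")
      case True
      show ?thesis
      proof (cases "z' \<in> P")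
        case True
        then show ?thesis using \<open>z \<in> P\<close> zz t0(1) unfolding \<rho>_def inj_on_def by auto
      next
        case False
        then have "\<rho> z' \<notin> S" using r1(2) zz unfolding \<rho>_def by auto
        moreover have "\<rho> z \<in> S" using \<open>z \<in> P\<close> t0(2) unfolding \<rho>_def by auto
        ultimately show ?thesis using zz by simp
      qed
    next
      case False
      show ?thesis
      proof (cases "z' \<in> P")
        case True
        then have "\<rho> z' \<in> S" using t0(2) unfolding \<rho>_def by auto
        moreover have "\<rho> z \<notin> S" using False r1(2) zz unfolding \<rho>_def by auto
        ultimately show ?thesis using zz by simp
      next
        case False
        then show ?thesis using \<open>z \<notin> P\<close> zz r1(1) unfolding \<rho>_def inj_on_def by auto
      qed
    qed
  qed
  moreover have "\<forall>z\<in>F. vsort L (\<rho> z) = vsort L z" using t0(3) r1(3) unfolding \<rho>_def by auto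
  moreover have "\<forall>z\<in>P. \<rho> z = t0 z" unfolding \<rho>_def by simp
  ultimately show ?thesis by blast
qed

lemma ren_exl_key:
  assumes wf: "wf_struc L M" and inj: "inj_on \<rho> (vars \<phi>)" and rs: "\<forall>z\<in>vars \<phi>. vsort L (\<rho> z) = vsort L z"
    and dis: "\<rho> ` vars \<phi> \<inter> W = {}" and hW: "\<forall>w\<in>fv \<phi>. h w \<in> W \<and> vsort L (h w) = vsort L w"
    and u: "okv L M W u"
  shows "sat L M u (exl (map \<rho> (lst (fv \<phi>)))
             (FConj (conjl (map (\<lambda>w. FEq (Var (\<rho> w)) (Var (h w))) (lst (fv \<phi>)))) (ren \<rho> \<phi>)))
         \<longleftrightarrow> sat L M (\<lambda>w. u (h w)) \<phi>"
proof -
  have sl: "set (lst (fv \<phi>)) = fv \<phi>" by (rule set_lst[OF finite_fv])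
  have fvv: "fv \<phi> \<subseteq> vars \<phi>" by (rule fv_vars)
  have injf: "inj_on \<rho> (fv \<phi>)" by (rule inj_on_subset[OF inj fvv])
  have hnot: "\<And>w. w \<in> fv \<phi> \<Longrightarrow> h w \<notin> \<rho> ` fv \<phi>"
  proof
    fix w assume w: "w \<in> fv \<phi>" and "h w \<in> \<rho> ` fv \<phi>"
    then have "h w \<in> \<rho> ` vars \<phi>" using fvv by blast
    moreover have "h w \<in> W" using hW w by blast
    ultimately show False using dis by blast
  qed
  show ?thesis
  proof
    assume "sat L M u (exl (map \<rho> (lst (fv \<phi>)))
             (FConj (conjl (map (\<lambda>w. FEq (Var (\<rho> w)) (Var (h w))) (lst (fv \<phi>)))) (ren \<rho> \<phi>)))"
    then obtain v' where v': "\<forall>w. w \<notin> \<rho> ` fv \<phi> \<longrightarrow> v' w = u w"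
      "sat L M v' (conjl (map (\<lambda>w. FEq (Var (\<rho> w)) (Var (h w))) (lst (fv \<phi>))))"
      "sat L M v' (ren \<rho> \<phi>)"
      unfolding sat_exl by (auto simp: sl)
    have eq: "\<forall>w\<in>fv \<phi>. v' (\<rho> w) = v' (h w)" using v'(2) by (simp add: sat_conjl[OF wf] sl)
    have "sat L M (v' \<circ> \<rho>) \<phi>" using v'(3) sat_ren[OF inj rs] by blast
    moreover have "sat L M (v' \<circ> \<rho>) \<phi> = sat L M (\<lambda>w. u (h w)) \<phi>"
      by (rule sat_cong) (use eq v'(1) hnot in auto)
    ultimately show "sat L M (\<lambda>w. u (h w)) \<phi>" by simp
  next
    assume s: "sat L M (\<lambda>w. u (h w)) \<phi>"
    define v' where "v' z = (if z \<in> \<rho> ` fv \<phi> then u (h (inv_into (fv \<phi>) \<rho> z)) else u z)" for z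
    have vr: "\<And>w. w \<in> fv \<phi> \<Longrightarrow> v' (\<rho> w) = u (h w)"
      unfolding v'_def using injf by (simp add: inv_into_f_f)
    have vh: "\<And>w. w \<in> fv \<phi> \<Longrightarrow> v' (h w) = u (h w)"
      unfolding v'_def using hnot by simp
    have "\<forall>w. w \<notin> set (map \<rho> (lst (fv \<phi>))) \<longrightarrow> v' w = u w" unfolding v'_def by (simp add: sl)
    moreover have "okv L M (set (map \<rho> (lst (fv \<phi>)))) v'"
      unfolding okv_def
    proof
      fix z assume "z \<in> set (map \<rho> (lst (fv \<phi>)))"
      then obtain w where w: "w \<in> fv \<phi>" "z = \<rho> w" by (auto simp: sl)
      then have "vsort L z = vsort L w" using rs fvv by auto
      then show "v' z \<in> carr M \<and> esort M (v' z) = vsort L z" using vr[OF w(1)] w hW u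
        unfolding okv_def by auto
    qed
    moreover have "sat L M v' (FConj (conjl (map (\<lambda>w. FEq (Var (\<rho> w)) (Var (h w))) (lst (fv \<phi>)))) (ren \<rho> \<phi>))"
    proof -
      have "sat L M v' (conjl (map (\<lambda>w. FEq (Var (\<rho> w)) (Var (h w))) (lst (fv \<phi>))))"
        using vr vh by (simp add: sat_conjl[OF wf] sl)
      moreover have "sat L M (v' \<circ> \<rho>) \<phi>"
      proof -
        have "sat L M (v' \<circ> \<rho>) \<phi> = sat L M (\<lambda>w. u (h w)) \<phi>"
          by (rule sat_cong) (use vr in auto)
        then show ?thesis using s by simp
      qed
      then have "sat L M v' (ren \<rho> \<phi>)" using sat_ren[OF inj rs] by blast
      ultimately show ?thesis by simp
    qed
    ultimately show "sat L M u (exl (map \<rho> (lst (fv \<phi>)))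
             (FConj (conjl (map (\<lambda>w. FEq (Var (\<rho> w)) (Var (h w))) (lst (fv \<phi>)))) (ren \<rho> \<phi>)))"
      unfolding sat_exl by blast
  qed
qed


lemma hom:
  fixes M :: "('s,'f,'r,'a) struc" and K :: "'k set" and c c' :: "'v \<Rightarrow> 'a"
  assumes sh: "strongly_homogeneous L M K" and wf: "wf_struc L M" and inf: "infinite K"
    and sorts: "\<forall>s. K \<lesssim> {z. vsort L z = s}" and WK: "W \<prec> K"
    and c: "okv L M W c" and c': "okv L M W c'"
    and tp: "\<forall>\<chi>. wf_fm L \<chi> \<and> fv \<chi> \<subseteq> W \<and> sat L M c \<chi> \<longrightarrow> sat L M c' \<chi>"
  shows "\<exists>\<sigma>\<in>Aut L M. \<forall>w\<in>W. \<sigma> (c w) = c' w"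
proof -
  have tp2: "\<And>\<chi>. wf_fm L \<chi> \<Longrightarrow> fv \<chi> \<subseteq> W \<Longrightarrow> sat L M c \<chi> \<longleftrightarrow> sat L M c' \<chi>"
  proof -
    fix \<chi> :: "('f,'r,'v) fm" assume "wf_fm L \<chi>" "fv \<chi> \<subseteq> W"
    then show "sat L M c \<chi> \<longleftrightarrow> sat L M c' \<chi>"
      using tp[rule_format, of \<chi>] tp[rule_format, of "FNeg \<chi>"] by auto
  qed
  define B where "B = c ` W"
  have Bc: "B \<subseteq> carr M" using c unfolding B_def okv_def by auto
  have Bs: "B \<prec> K" unfolding B_def by (rule lesspoll_trans1[OF image_lepoll WK])
  define hh where "hh b = (SOME w. w \<in> W \<and> c w = b)" for b
  have hh: "\<And>b. b \<in> B \<Longrightarrow> hh b \<in> W \<and> c (hh b) = b"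
  proof -
    fix b assume "b \<in> B"
    then have "\<exists>w. w \<in> W \<and> c w = b" unfolding B_def by blast
    then show "hh b \<in> W \<and> c (hh b) = b" unfolding hh_def by (rule someI_ex)
  qed
  have wd: "\<And>w w'. w \<in> W \<Longrightarrow> w' \<in> W \<Longrightarrow> c w = c w' \<Longrightarrow> c' w = c' w'"
  proof -
    fix w w' assume w: "w \<in> W" "w' \<in> W" "c w = c w'"
    have "vsort L w = vsort L w'" using c w unfolding okv_def by metis
    then have "wf_fm L (FEq (Var w) (Var w'))" by (auto intro!: wt.intros)
    moreover have "fv (FEq (Var w) (Var w')) \<subseteq> W" using w by simp
    ultimately show "c' w = c' w'" using tp2 w(3) by fastforce
  qed
  define f where "f b = c' (hh b)" for b
  have "elementary_on L M B f"
    unfolding elementary_on_def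
  proof (intro conjI allI impI ballI)
    fix b assume b: "b \<in> B"
    have "vsort L (hh b) = esort M b" using hh[OF b] c unfolding okv_def by metis
    then show "f b \<in> carr M" "esort M (f b) = esort M b"
      using hh[OF b] c' unfolding okv_def f_def by auto
  next
    fix \<phi> :: "('f,'r,'v) fm" and e :: "'v \<Rightarrow> 'a"
    assume a: "wf_fm L \<phi> \<and> (\<forall>w\<in>fv \<phi>. e w \<in> B \<and> esort M (e w) = vsort L w)"
    define h where "h w = hh (e w)" for w
    have hW: "\<forall>w\<in>fv \<phi>. h w \<in> W \<and> vsort L (h w) = vsort L w"
    proof
      fix w assume w: "w \<in> fv \<phi>"
      then have eB: "e w \<in> B" using a by blast
      have "vsort L (h w) = esort M (c (h w))" using hh[OF eB] c unfolding okv_def h_def by metis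
      also have "\<dots> = esort M (e w)" using hh[OF eB] h_def by simp
      also have "\<dots> = vsort L w" using a w by blast
      finally show "h w \<in> W \<and> vsort L (h w) = vsort L w" using hh[OF eB] h_def by simp
    qed
    obtain \<rho> where \<rho>: "inj_on \<rho> (vars \<phi>)" "\<rho> ` vars \<phi> \<inter> W = {}" "\<forall>z\<in>vars \<phi>. vsort L (\<rho> z) = vsort L z"
      using fresh_inj[OF finite_vars WK inf sorts] by blast
    define \<chi> where "\<chi> = exl (map \<rho> (lst (fv \<phi>)))
             (FConj (conjl (map (\<lambda>w. FEq (Var (\<rho> w)) (Var (h w))) (lst (fv \<phi>)))) (ren \<rho> \<phi>))"
    have sl: "set (lst (fv \<phi>)) = fv \<phi>" by (rule set_lst[OF finite_fv])
    have wf\<chi>: "wf_fm L \<chi>"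
    proof -
      have "\<forall>w\<in>fv \<phi>. wf_fm L (FEq (Var (\<rho> w)) (Var (h w)))"
      proof
        fix w assume w: "w \<in> fv \<phi>"
        have "vsort L (\<rho> w) = vsort L w" using \<rho>(3) subsetD[OF fv_vars w] by blast
        then show "wf_fm L (FEq (Var (\<rho> w)) (Var (h w)))" using hW w by (auto intro!: wt.intros)
      qed
      moreover have "wf_fm L (ren \<rho> \<phi>)" by (rule wf_ren) (use a \<rho>(3) in auto)
      ultimately show ?thesis unfolding \<chi>_def wf_exl by (simp add: wf_conjl sl)
    qed
    have fv\<chi>: "fv \<chi> \<subseteq> W"
    proof -
      have "fv \<chi> = ((\<Union>w\<in>fv \<phi>. {\<rho> w, h w}) \<union> \<rho> ` fv \<phi>) - \<rho> ` fv \<phi>"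
        unfolding \<chi>_def fv_exl using fv_ren[OF \<rho>(1)] by (simp add: fv_conjl sl insert_commute)
      then show ?thesis using hW by auto
    qed
    have "sat L M e \<phi> = sat L M (\<lambda>w. c (h w)) \<phi>"
      by (rule sat_cong) (use hh a in \<open>auto simp: h_def\<close>)
    also have "\<dots> = sat L M c \<chi>" unfolding \<chi>_def using ren_exl_key[OF wf \<rho>(1,3,2) hW c] by simp
    also have "\<dots> = sat L M c' \<chi>" using tp2[OF wf\<chi> fv\<chi>] .
    also have "\<dots> = sat L M (\<lambda>w. c' (h w)) \<phi>" unfolding \<chi>_def using ren_exl_key[OF wf \<rho>(1,3,2) hW c'] by simp
    also have "\<dots> = sat L M (f \<circ> e) \<phi>"
      by (rule sat_cong) (simp add: h_def f_def)
    finally show "sat L M e \<phi> = sat L M (f \<circ> e) \<phi>" .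
  qed
  then have "\<exists>\<sigma>\<in>Aut L M. \<forall>b\<in>B. \<sigma> b = f b"
    using sh[unfolded strongly_homogeneous_def, rule_format, of B f] Bc Bs by blast
  then obtain \<sigma> where \<sigma>: "\<sigma> \<in> Aut L M" "\<forall>b\<in>B. \<sigma> b = f b" by blast
  have "\<forall>w\<in>W. \<sigma> (c w) = c' w"
  proof
    fix w assume w: "w \<in> W"
    then have cB: "c w \<in> B" unfolding B_def by blast
    have "\<sigma> (c w) = c' (hh (c w))" using \<sigma>(2) cB f_def by simp
    also have "\<dots> = c' w" using wd[of "hh (c w)" w] hh[OF cB] w by simp
    finally show "\<sigma> (c w) = c' w" .
  qed
  then show ?thesis using \<sigma>(1) by blast
qed


lemma rnm_ex:
  fixes x y p q :: "'i \<Rightarrow> 'v" and K :: "'k set" and M :: "('s,'f,'r,'a) struc"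
  assumes ix: "inj x" and iy: "inj y" and dj: "range x \<inter> range y = {}"
    and p: "inj p" and q: "inj q" and pq: "range p \<inter> range q = {}"
    and ps: "\<forall>i. vsort L (p i) = vsort L (x i)" and qs: "\<forall>i. vsort L (q i) = vsort L (y i)"
    and S: "range p \<union> range q \<subseteq> S" "S \<prec> K" and inf: "infinite K"
    and sorts: "\<forall>s. K \<lesssim> {z. vsort L z = s}" and \<phi>: "fm_in L x y \<phi>"
  shows "\<exists>\<chi>. wf_fm L \<chi> \<and> fv \<chi> \<subseteq> range p \<union> range q \<and>
            (\<forall>v. sat L M v \<chi> \<longleftrightarrow> sat L M (asg2 x y (v \<circ> p) (v \<circ> q)) \<phi>)"
proof -
  define P where "P = vars \<phi> \<inter> (range x \<union> range y)"
  define t0 where "t0 z = (if z \<in> range x then p (inv x z) else q (inv y z))" for z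
  have injt: "inj_on t0 P"
    unfolding inj_on_def
  proof (intro ballI impI)
    fix z z' assume zz: "z \<in> P" "z' \<in> P" "t0 z = t0 z'"
    show "z = z'"
    proof (cases "z \<in> range x")
      case zx: True
      show ?thesis
      proof (cases "z' \<in> range x")
        case True
        then have "p (inv x z) = p (inv x z')" using zx zz(3) unfolding t0_def by simp
        then have "inv x z = inv x z'" using p by (simp add: inj_eq)
        then show ?thesis using zx True by (metis f_inv_into_f)
      next
        case False
        then have "t0 z' \<in> range q" "t0 z \<in> range p" using zx unfolding t0_def by auto
        then show ?thesis using pq zz(3) by auto
      qed
    next
      case zx: False
      then have zy: "z \<in> range y" using zz(1) unfolding P_def by blast
      show ?thesis
      proof (cases "z' \<in> range x")
        case True
        then have "t0 z' \<in> range p" "t0 z \<in> range q" using zx unfolding t0_def by auto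
        then show ?thesis using pq zz(3) by auto
      next
        case False
        then have zy': "z' \<in> range y" using zz(2) unfolding P_def by blast
        have "q (inv y z) = q (inv y z')" using zx False zz(3) unfolding t0_def by simp
        then have "inv y z = inv y z'" using q by (simp add: inj_eq)
        then show ?thesis using zy zy' by (metis f_inv_into_f)
      qed
    qed
  qed
  have t0S: "t0 ` P \<subseteq> S" using S(1) unfolding t0_def by auto
  have t0s: "\<forall>z\<in>P. vsort L (t0 z) = vsort L z"
  proof
    fix z assume z: "z \<in> P"
    show "vsort L (t0 z) = vsort L z"
    proof (cases "z \<in> range x")
      case True
      then obtain i where "z = x i" by blast
      then show ?thesis using ps ix True unfolding t0_def by simp
    next
      case False
      then obtain i where "z = y i" using z unfolding P_def by blast
      then show ?thesis using qs iy False unfolding t0_def by simp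
    qed
  qed
  obtain \<rho> where \<rho>: "\<forall>z\<in>P. \<rho> z = t0 z" "inj_on \<rho> (vars \<phi>)" "\<forall>z\<in>vars \<phi>. vsort L (\<rho> z) = vsort L z"
    using ext_ren[OF finite_vars S(2) inf sorts injt t0S t0s] by blast
  have fvP: "fv \<phi> \<subseteq> P" using \<phi> fv_vars[of \<phi>] unfolding fm_in_def P_def by blast
  have "wf_fm L (ren \<rho> \<phi>)" by (rule wf_ren) (use \<phi> \<rho>(3) in \<open>auto simp: fm_in_def\<close>)
  moreover have "fv (ren \<rho> \<phi>) \<subseteq> range p \<union> range q"
  proof -
    have "fv (ren \<rho> \<phi>) = \<rho> ` fv \<phi>" by (rule fv_ren[OF \<rho>(2)])
    also have "\<dots> \<subseteq> t0 ` P" using \<rho>(1) fvP by auto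
    also have "\<dots> \<subseteq> range p \<union> range q" unfolding t0_def by auto
    finally show ?thesis .
  qed
  moreover have "\<forall>v. sat L M v (ren \<rho> \<phi>) \<longleftrightarrow> sat L M (asg2 x y (v \<circ> p) (v \<circ> q)) \<phi>"
  proof
    fix v
    have "sat L M v (ren \<rho> \<phi>) = sat L M (v \<circ> \<rho>) \<phi>" by (rule sat_ren[OF \<rho>(2,3)])
    also have "\<dots> = sat L M (asg2 x y (v \<circ> p) (v \<circ> q)) \<phi>"
    proof (rule sat_cong, intro ballI)
      fix z assume z: "z \<in> fv \<phi>"
      then have zP: "z \<in> P" using fvP by blast
      then show "(v \<circ> \<rho>) z = asg2 x y (v \<circ> p) (v \<circ> q) z"
        using \<rho>(1) unfolding asg2_def t0_def P_def by auto
    qed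
    finally show "sat L M v (ren \<rho> \<phi>) \<longleftrightarrow> sat L M (asg2 x y (v \<circ> p) (v \<circ> q)) \<phi>" .
  qed
  ultimately show ?thesis by blast
qed

lemma emb:
  fixes x :: "'i \<Rightarrow> 'v" and K :: "'k set"
  assumes IK: "(UNIV :: 'i set) \<prec> K" and inf: "infinite K"
    and sorts: "\<forall>s. K \<lesssim> {z. vsort L z = s}" and S: "S \<prec> K"
  shows "\<exists>u. inj u \<and> (\<forall>i. vsort L (u i) = vsort L (x i)) \<and> range u \<inter> S = {}"
proof -
  have "\<forall>s. \<exists>g. inj_on g {i. vsort L (x i) = s} \<and> g ` {i. vsort L (x i) = s} \<subseteq> {z. vsort L z = s} - S"
  proof
    fix s
    have "K \<lesssim> {z. vsort L z = s} - S" using big_diff[OF inf S] sorts by blast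
    moreover have "{i. vsort L (x i) = s} \<lesssim> K"
      by (rule lepoll_trans[OF subset_imp_lepoll[OF subset_UNIV] lesspoll_imp_lepoll[OF IK]])
    ultimately have "{i. vsort L (x i) = s} \<lesssim> {z. vsort L z = s} - S" using lepoll_trans[of "{i. vsort L (x i) = s}" K] by blast
    then show "\<exists>g. inj_on g {i. vsort L (x i) = s} \<and> g ` {i. vsort L (x i) = s} \<subseteq> {z. vsort L z = s} - S"
      unfolding lepoll_def .
  qed
  then obtain g where g: "\<And>s. inj_on (g s) {i. vsort L (x i) = s}"
     "\<And>s. g s ` {i. vsort L (x i) = s} \<subseteq> {z. vsort L z = s} - S" by metis
  define u where "u i = g (vsort L (x i)) i" for i
  have us: "\<forall>i. vsort L (u i) = vsort L (x i)" using g(2) unfolding u_def by blast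
  have "inj u"
  proof (rule injI)
    fix i i' assume e: "u i = u i'"
    then have "vsort L (x i) = vsort L (x i')" using us by metis
    then show "i = i'" using e g(1)[of "vsort L (x i)"] unfolding u_def inj_on_def by auto
  qed
  moreover have "range u \<inter> S = {}" using g(2) unfolding u_def by blast
  ultimately show ?thesis using us by blast
qed

lemma uu_exists:
  fixes x :: "'i \<Rightarrow> 'v" and K :: "'k set" and m :: nat
  assumes IK: "(UNIV :: 'i set) \<prec> K" and inf: "infinite K"
    and sorts: "\<forall>s. K \<lesssim> {z. vsort L z = s}" and S: "S \<prec> K"
  shows "\<exists>uu. (\<forall>k\<le>m. inj (uu k) \<and> range (uu k) \<inter> S = {}) \<and> (\<forall>k i. vsort L (uu k i) = vsort L (x i)) \<and>
     (\<forall>k\<le>m. \<forall>k'\<le>m. k \<noteq> k' \<longrightarrow> range (uu k) \<inter> range (uu k') = {}) \<and> (\<Union>k\<le>m. range (uu k)) \<prec> K"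
proof (induction m)
  case 0
  obtain u where u: "inj u" "\<forall>i. vsort L (u i) = vsort L (x i)" "range u \<inter> S = {}"
    using emb[OF IK inf sorts S] by blast
  have "range u \<prec> K" using lesspoll_trans1[OF image_lepoll IK] .
  then show ?case using u by (intro exI[of _ "\<lambda>_. u"]) auto
next
  case (Suc m)
  then obtain uu where uu: "\<forall>k\<le>m. inj (uu k) \<and> range (uu k) \<inter> S = {}" "\<forall>k i. vsort L (uu k i) = vsort L (x i)"
     "\<forall>k\<le>m. \<forall>k'\<le>m. k \<noteq> k' \<longrightarrow> range (uu k) \<inter> range (uu k') = {}" "(\<Union>k\<le>m. range (uu k)) \<prec> K"
    by blast
  have S': "S \<union> (\<Union>k\<le>m. range (uu k)) \<prec> K" using Un_lesspoll[OF inf S uu(4)] .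
  obtain u where u: "inj u" "\<forall>i. vsort L (u i) = vsort L (x i)" "range u \<inter> (S \<union> (\<Union>k\<le>m. range (uu k))) = {}"
    using emb[OF IK inf sorts S'] by blast
  define uu' where "uu' = uu(Suc m := u)"
  have "\<forall>k\<le>Suc m. inj (uu' k) \<and> range (uu' k) \<inter> S = {}"
    using uu(1) u unfolding uu'_def by (auto simp: le_Suc_eq)
  moreover have "\<forall>k i. vsort L (uu' k i) = vsort L (x i)" using uu(2) u(2) unfolding uu'_def by simp
  moreover have "\<forall>k\<le>Suc m. \<forall>k'\<le>Suc m. k \<noteq> k' \<longrightarrow> range (uu' k) \<inter> range (uu' k') = {}"
  proof (intro allI impI)
    fix k k' assume k: "k \<le> Suc m" "k' \<le> Suc m" "k \<noteq> k'"
    show "range (uu' k) \<inter> range (uu' k') = {}"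
    proof (cases "k = Suc m")
      case True
      then have "k' \<le> m" using k by simp
      then have "range (uu k') \<subseteq> (\<Union>k\<le>m. range (uu k))" by blast
      then show ?thesis using True u(3) k unfolding uu'_def by auto
    next
      case False
      then have km: "k \<le> m" using k by simp
      show ?thesis
      proof (cases "k' = Suc m")
        case True
        have "range (uu k) \<subseteq> (\<Union>k\<le>m. range (uu k))" using km by blast
        then show ?thesis using True u(3) False unfolding uu'_def by auto
      next
        case False
        then show ?thesis using km k uu(3) \<open>k \<noteq> Suc m\<close> unfolding uu'_def by auto
      qed
    qed
  qed
  moreover have "(\<Union>k\<le>Suc m. range (uu' k)) \<prec> K"
  proof -
    have "(\<Union>k\<le>Suc m. range (uu' k)) = (\<Union>k\<le>m. range (uu k)) \<union> range u"
      unfolding uu'_def by (auto simp: atMost_Suc)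
    moreover have "range u \<prec> K" using lesspoll_trans1[OF image_lepoll IK] .
    ultimately show ?thesis using Un_lesspoll[OF inf uu(4)] by simp
  qed
  ultimately show ?case by blast
qed


datatype 'x cidx = CP nat 'x | CT nat 'x | CT0 'x | CN

locale st =
  fixes L :: "('s,'f,'r,'v) lang" and T :: "('f,'r,'v) fm set" and M :: "('s,'f,'r,'a) struc"
    and K :: "'k set" and x y :: "'i \<Rightarrow> 'v" and a :: "'i \<Rightarrow> 'a" and n :: nat
    and \<pi> :: "nat \<Rightarrow> ('f,'r,'v) fm set" and \<epsilon> :: "nat \<Rightarrow> int"
    and uu :: "nat \<Rightarrow> 'i \<Rightarrow> 'v" and Av :: "'v set"
  assumes mon: "monster L T M K" and IK: "(UNIV :: 'i set) \<prec> K"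
    and ix: "inj x" and iy: "inj y" and dj: "range x \<inter> range y = {}"
    and vs: "\<forall>i. vsort L (x i) = vsort L (y i)"
    and aok: "\<forall>i. a i \<in> carr M \<and> esort M (a i) = vsort L (x i)"
    and fm: "\<forall>i<n. \<forall>\<phi>\<in>\<pi> i. fm_in L x y \<phi>"
    and uinj: "\<forall>k\<le>n. inj (uu k)" and uav: "\<forall>k\<le>n. range (uu k) \<inter> Av = {}"
    and usort: "\<forall>k i. vsort L (uu k i) = vsort L (x i)"
    and udis: "\<forall>k\<le>n. \<forall>k'\<le>n. k \<noteq> k' \<longrightarrow> range (uu k) \<inter> range (uu k') = {}"
    and usmall: "(\<Union>k\<le>n. range (uu k)) \<prec> K" and finAv: "finite Av"
begin

lemma wf: "wf_struc L M" using mon unfolding monster_def is_model_def by blast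
lemma inf: "infinite K" using mon unfolding monster_def by blast
lemma sorts: "\<forall>s. K \<lesssim> {z. vsort L z = s}" using mon unfolding monster_def by blast
lemma satd: "saturated L M K" using mon unfolding monster_def by blast
lemma sh: "strongly_homogeneous L M K" using mon unfolding monster_def by blast
lemma atup: "tupok L M x a" using aok unfolding tupok_def by blast

definition UU where "UU = (\<Union>k\<le>n. range (uu k))"

lemma VVs: "UU \<union> Av \<prec> K" unfolding UU_def using finite_Un_lesspoll[OF inf usmall finAv] .

lemma range_small: "range (uu k) \<prec> K" using lesspoll_trans1[OF image_lepoll IK] .

definition dflt :: "'v \<Rightarrow> 'a" where "dflt z = (SOME b. b \<in> carr M \<and> esort M b = vsort L z)"

lemma dflt_ok: "okv L M S dflt"
proof -
  have "\<And>z. \<exists>b. b \<in> carr M \<and> esort M b = vsort L z" using wf unfolding wf_struc_def by blast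
  then show ?thesis unfolding okv_def dflt_def by (metis (mono_tags, lifting) someI_ex)
qed

definition ixu :: "'v \<Rightarrow> nat \<times> 'i" where
  "ixu z = (SOME ki. fst ki \<le> n \<and> uu (fst ki) (snd ki) = z)"

definition vof :: "(nat \<Rightarrow> 'i \<Rightarrow> 'a) \<Rightarrow> 'v \<Rightarrow> 'a" where
  "vof E z = (if z \<in> UU then E (fst (ixu z)) (snd (ixu z)) else dflt z)"

lemma uu_eq: "k \<le> n \<Longrightarrow> k' \<le> n \<Longrightarrow> uu k i = uu k' i' \<Longrightarrow> k = k' \<and> i = i'"
proof -
  assume k: "k \<le> n" "k' \<le> n" "uu k i = uu k' i'"
  have "k = k'"
  proof (rule ccontr)
    assume "k \<noteq> k'"
    then have "range (uu k) \<inter> range (uu k') = {}" using udis k by blast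
    then show False using k(3) by (metis disjoint_iff rangeI)
  qed
  then show ?thesis using k uinj by (metis injD)
qed

lemma vof_uu: "k \<le> n \<Longrightarrow> vof E (uu k i) = E k i"
proof -
  assume k: "k \<le> n"
  have inU: "uu k i \<in> UU" unfolding UU_def using k by blast
  have "\<exists>ki. fst ki \<le> n \<and> uu (fst ki) (snd ki) = uu k i" using k by (intro exI[of _ "(k,i)"]) simp
  then have "fst (ixu (uu k i)) \<le> n \<and> uu (fst (ixu (uu k i))) (snd (ixu (uu k i))) = uu k i"
    unfolding ixu_def by (rule someI_ex)
  then have "fst (ixu (uu k i)) = k \<and> snd (ixu (uu k i)) = i" using uu_eq k by blast
  then show ?thesis using inU unfolding vof_def by simp
qed

lemma vof_comp: "k \<le> n \<Longrightarrow> vof E \<circ> uu k = E k"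
  using vof_uu by fastforce

lemma vof_notU: "z \<notin> UU \<Longrightarrow> vof E z = dflt z"
  unfolding vof_def by simp

lemma vof_ok: "\<forall>k\<le>n. tupok L M x (E k) \<Longrightarrow> okv L M S (vof E)"
  unfolding okv_def
proof
  fix z assume E: "\<forall>k\<le>n. tupok L M x (E k)"
  show "vof E z \<in> carr M \<and> esort M (vof E z) = vsort L z"
  proof (cases "z \<in> UU")
    case True
    then obtain k i where ki: "k \<le> n" "z = uu k i" unfolding UU_def by blast
    then show ?thesis using vof_uu[OF ki(1)] E usort unfolding tupok_def by simp
  next
    case False then show ?thesis using vof_notU dflt_ok[of UNIV] unfolding okv_def by simp
  qed
qed

definition pf :: "nat \<Rightarrow> ('f,'r,'v) fm \<Rightarrow> ('f,'r,'v) fm" where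
  "pf k \<phi> = (SOME \<chi>. wf_fm L \<chi> \<and> fv \<chi> \<subseteq> range (uu (Suc k)) \<union> range (uu k) \<and>
     (\<forall>v. sat L M v \<chi> \<longleftrightarrow> (if \<epsilon> k = 1 then sat L M (asg2 x y (v \<circ> uu (Suc k)) (v \<circ> uu k)) \<phi>
                                        else sat L M (asg2 x y (v \<circ> uu k) (v \<circ> uu (Suc k))) \<phi>)))"

lemma pf:
  assumes k: "k < n" and \<phi>: "\<phi> \<in> \<pi> k"
  shows "wf_fm L (pf k \<phi>) \<and> fv (pf k \<phi>) \<subseteq> range (uu (Suc k)) \<union> range (uu k) \<and>
     (\<forall>v. sat L M v (pf k \<phi>) \<longleftrightarrow> (if \<epsilon> k = 1 then sat L M (asg2 x y (v \<circ> uu (Suc k)) (v \<circ> uu k)) \<phi>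
                                        else sat L M (asg2 x y (v \<circ> uu k) (v \<circ> uu (Suc k))) \<phi>))"
proof -
  have f: "fm_in L x y \<phi>" using fm k \<phi> by blast
  have i1: "inj (uu k)" "inj (uu (Suc k))" using uinj k by auto
  have d: "range (uu (Suc k)) \<inter> range (uu k) = {}" "range (uu k) \<inter> range (uu (Suc k)) = {}"
    using udis k by auto
  have s1: "\<forall>i. vsort L (uu k i) = vsort L (x i)" "\<forall>i. vsort L (uu (Suc k) i) = vsort L (x i)"
    "\<forall>i. vsort L (uu k i) = vsort L (y i)" "\<forall>i. vsort L (uu (Suc k) i) = vsort L (y i)"
    using usort vs by auto
  have "range (uu (Suc k)) \<subseteq> UU" unfolding UU_def using k by (intro UN_upper) simp
  moreover have "range (uu k) \<subseteq> UU" unfolding UU_def using k by (intro UN_upper) simp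
  ultimately
  have S: "range (uu (Suc k)) \<union> range (uu k) \<subseteq> UU \<union> Av" "range (uu k) \<union> range (uu (Suc k)) \<subseteq> UU \<union> Av"
    by auto
  show ?thesis
  proof (cases "\<epsilon> k = 1")
    case True
    obtain \<chi> where "wf_fm L \<chi> \<and> fv \<chi> \<subseteq> range (uu (Suc k)) \<union> range (uu k) \<and>
            (\<forall>v. sat L M v \<chi> \<longleftrightarrow> sat L M (asg2 x y (v \<circ> uu (Suc k)) (v \<circ> uu k)) \<phi>)"
      using rnm_ex[OF ix iy dj i1(2) i1(1) d(1) s1(2) s1(3) S(1) VVs inf sorts f] by blast
    then have "\<exists>\<chi>. wf_fm L \<chi> \<and> fv \<chi> \<subseteq> range (uu (Suc k)) \<union> range (uu k) \<and>
     (\<forall>v. sat L M v \<chi> \<longleftrightarrow> (if \<epsilon> k = 1 then sat L M (asg2 x y (v \<circ> uu (Suc k)) (v \<circ> uu k)) \<phi>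
                                        else sat L M (asg2 x y (v \<circ> uu k) (v \<circ> uu (Suc k))) \<phi>))"
      using True by auto
    then show ?thesis unfolding pf_def by (rule someI_ex)
  next
    case False
    obtain \<chi> where "wf_fm L \<chi> \<and> fv \<chi> \<subseteq> range (uu k) \<union> range (uu (Suc k)) \<and>
            (\<forall>v. sat L M v \<chi> \<longleftrightarrow> sat L M (asg2 x y (v \<circ> uu k) (v \<circ> uu (Suc k))) \<phi>)"
      using rnm_ex[OF ix iy dj i1(1) i1(2) d(2) s1(1) s1(4) S(2) VVs inf sorts f] by blast
    then have "\<exists>\<chi>. wf_fm L \<chi> \<and> fv \<chi> \<subseteq> range (uu (Suc k)) \<union> range (uu k) \<and>
     (\<forall>v. sat L M v \<chi> \<longleftrightarrow> (if \<epsilon> k = 1 then sat L M (asg2 x y (v \<circ> uu (Suc k)) (v \<circ> uu k)) \<phi>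
                                        else sat L M (asg2 x y (v \<circ> uu k) (v \<circ> uu (Suc k))) \<phi>))"
      using False by auto
    then show ?thesis unfolding pf_def by (rule someI_ex)
  qed
qed

lemma pf_prs:
  assumes k: "k < n"
  shows "(\<forall>\<phi>\<in>\<pi> k. sat L M v (pf k \<phi>)) \<longleftrightarrow> prs L M x y (\<pi> k) (\<epsilon> k) (v \<circ> uu (Suc k)) (v \<circ> uu k)"
  using pf[OF k] unfolding prs_def by auto

definition asgu :: "nat \<Rightarrow> ('i \<Rightarrow> 'a) \<Rightarrow> 'v \<Rightarrow> 'a" where
  "asgu k c = (\<lambda>z. c (inv (uu k) z))"

lemma asgu_uu: "k \<le> n \<Longrightarrow> asgu k c (uu k i) = c i"
  unfolding asgu_def using uinj by (simp add: inv_f_f)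

lemma asgu_ok: "k \<le> n \<Longrightarrow> tupok L M x c \<Longrightarrow> okv L M (range (uu k)) (asgu k c)"
  unfolding okv_def tupok_def using asgu_uu usort by auto

lemma fam_ok:
  assumes k: "k < n" and F: "F \<subseteq> \<pi> k" "finite F"
  shows "fm_in L x y (conjl (lst F)) \<and> entails L T (\<pi> k) (conjl (lst F)) TYPE('a)"
proof
  have sF: "set (lst F) = F" using set_lst[OF F(2)] .
  show "fm_in L x y (conjl (lst F))" using fm k F(1) unfolding fm_in_def
    by (auto simp: wf_conjl fv_conjl sF)
  show "entails L T (\<pi> k) (conjl (lst F)) TYPE('a)"
    unfolding entails_def
  proof (intro allI impI)
    fix N :: "('s,'f,'r,'a) struc" and v
    assume "is_model L N T \<and> assignment L N v" "\<forall>\<psi>\<in>\<pi> k. sat L N v \<psi>"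
    then show "sat L N v (conjl (lst F))" using F(1) sat_conjl[of L N v] sF
      unfolding is_model_def by auto
  qed
qed

lemma prs_conjl:
  assumes "finite F" "prs L M x y {conjl (lst F)} e c c'"
  shows "prs L M x y F e c c'"
  using assms sat_conjl[OF wf] set_lst[OF assms(1)] unfolding prs_def by (auto split: if_splits)

end


context st begin

lemma get_hk:
  assumes k: "k \<le> n" and v: "okv L M (range (uu k)) v"
    and tp: "\<forall>\<chi>. wf_fm L \<chi> \<and> fv \<chi> \<subseteq> range (uu k) \<and> sat L M (asgu k a) \<chi> \<longrightarrow> sat L M v \<chi>"
  shows "\<exists>g\<in>Aut L M. \<forall>i. ginv M g (a i) = v (uu k i)"
proof -
  have tp': "\<forall>\<chi>. wf_fm L \<chi> \<and> fv \<chi> \<subseteq> range (uu k) \<and> sat L M v \<chi> \<longrightarrow> sat L M (asgu k a) \<chi>"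
  proof (intro allI impI)
    fix \<chi> :: "('f,'r,'v) fm" assume c: "wf_fm L \<chi> \<and> fv \<chi> \<subseteq> range (uu k) \<and> sat L M v \<chi>"
    show "sat L M (asgu k a) \<chi>"
    proof (rule ccontr)
      assume "\<not> sat L M (asgu k a) \<chi>"
      then have "sat L M (asgu k a) (FNeg \<chi>)" by simp
      then have "sat L M v (FNeg \<chi>)" using tp[rule_format, of "FNeg \<chi>"] c by simp
      then show False using c by simp
    qed
  qed
  obtain g where g: "g \<in> Aut L M" "\<forall>w\<in>range (uu k). g (v w) = asgu k a w"
    using hom[OF sh wf inf sorts range_small v asgu_ok[OF k atup] tp'] by blast
  have "\<forall>i. ginv M g (a i) = v (uu k i)"
  proof
    fix i
    have "g (v (uu k i)) = a i" using g(2) asgu_uu[OF k] by auto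
    then show "ginv M g (a i) = v (uu k i)" using ginv_left_pt[OF g(1)] by metis
  qed
  then show ?thesis using g(1) by blast
qed

lemma part_i:
  assumes n1: "1 \<le> n"
    and \<sigma>: "\<sigma> \<in> \<Inter> {setprods M (\<lambda>i. A_set L M {\<phi> i} x y a) \<epsilon> n | \<phi>.
                 \<forall>i<n. fm_in L x y (\<phi> i) \<and> entails L T (\<pi> i) (\<phi> i) TYPE('a)}"
  shows "\<sigma> \<in> setprods M (\<lambda>i. A_set L M (\<pi> i) x y a) \<epsilon> n"
proof -
  note core1 = core[OF ix iy dj vs wf atup]
  have memb: "\<And>\<phi>. (\<forall>i<n. fm_in L x y (\<phi> i) \<and> entails L T (\<pi> i) (\<phi> i) TYPE('a)) \<Longrightarrow>
       \<sigma> \<in> setprods M (\<lambda>i. A_set L M {\<phi> i} x y a) \<epsilon> n" using \<sigma> by blast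
  have famF: "\<And>F. (\<forall>k<n. F k \<subseteq> \<pi> k \<and> finite (F k)) \<Longrightarrow>
      \<exists>h. h 0 = \<sigma> \<and> h n = id \<and> (\<forall>k\<le>n. h k \<in> Aut L M) \<and>
       (\<forall>k<n. prs L M x y (F k) (\<epsilon> k) (ginv M (h (Suc k)) \<circ> a) (ginv M (h k) \<circ> a))"
  proof -
    fix F assume F: "\<forall>k<n. F k \<subseteq> \<pi> k \<and> finite (F k)"
    have "\<forall>i<n. fm_in L x y (conjl (lst (F i))) \<and> entails L T (\<pi> i) (conjl (lst (F i))) TYPE('a)"
      using fam_ok F by blast
    then have "\<sigma> \<in> setprods M (\<lambda>i. A_set L M {conjl (lst (F i))} x y a) \<epsilon> n" by (rule memb)
    moreover have "\<forall>k<n. \<forall>\<phi>\<in>{conjl (lst (F k))}. fm_in L x y \<phi>"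
      using fam_ok F by blast
    ultimately obtain h where h: "h 0 = \<sigma>" "h n = id" "\<forall>k\<le>n. h k \<in> Aut L M"
       "\<forall>k<n. prs L M x y {conjl (lst (F k))} (\<epsilon> k) (ginv M (h (Suc k)) \<circ> a) (ginv M (h k) \<circ> a)"
      using core1[of n "\<lambda>k. {conjl (lst (F k))}"] by blast
    have "\<forall>k<n. prs L M x y (F k) (\<epsilon> k) (ginv M (h (Suc k)) \<circ> a) (ginv M (h k) \<circ> a)"
      using h(4) F prs_conjl by blast
    then show "\<exists>h. h 0 = \<sigma> \<and> h n = id \<and> (\<forall>k\<le>n. h k \<in> Aut L M) \<and>
       (\<forall>k<n. prs L M x y (F k) (\<epsilon> k) (ginv M (h (Suc k)) \<circ> a) (ginv M (h k) \<circ> a))"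
      using h by blast
  qed
  have \<sigma>A: "\<sigma> \<in> Aut L M" using famF[of "\<lambda>_. {}"] by auto
  define J where "J = {CP k \<phi> | k \<phi>. k < n \<and> \<phi> \<in> \<pi> k} \<union>
     {CT k \<chi> | k \<chi>. 0 < k \<and> k < n \<and> wf_fm L \<chi> \<and> fv \<chi> \<subseteq> range (uu k) \<and> sat L M (asgu k a) \<chi>}"
  define \<Phi> where "\<Phi> j = (case j of CP k \<phi> \<Rightarrow> pf k \<phi> | CT k \<chi> \<Rightarrow> \<chi> | _ \<Rightarrow> ttrue)" for j
  define W where "W = (\<Union>k\<in>{k. 0 < k \<and> k < n}. range (uu k))"
  define E0 where "E0 (k::nat) = (if k = 0 then ginv M \<sigma> \<circ> a else a)" for k
  define e0 where "e0 = vof E0"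
  have E0ok: "\<forall>k\<le>n. tupok L M x (E0 k)" unfolding E0_def using tupok_aut[OF ginv_Aut[OF \<sigma>A wf] atup] atup by simp
  have WV: "W \<subseteq> UU" unfolding W_def UU_def by (rule UN_mono) auto
  have fvs: "\<forall>j\<in>J. wf_fm L (\<Phi> j) \<and> fv (\<Phi> j) \<subseteq> UU"
  proof
    fix j assume "j \<in> J"
    then consider (p) k \<phi> where "j = CP k \<phi>" "k < n" "\<phi> \<in> \<pi> k"
      | (t) k \<chi> where "j = CT k \<chi>" "0 < k" "k < n" "wf_fm L \<chi>" "fv \<chi> \<subseteq> range (uu k)"
      unfolding J_def by blast
    then show "wf_fm L (\<Phi> j) \<and> fv (\<Phi> j) \<subseteq> UU"
    proof cases
      case p
      have "range (uu (Suc k)) \<subseteq> UU" "range (uu k) \<subseteq> UU" unfolding UU_def using p(2)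
        by (intro UN_upper, simp)+
      moreover have "fv (pf k \<phi>) \<subseteq> range (uu (Suc k)) \<union> range (uu k)" "wf_fm L (pf k \<phi>)"
        using pf[OF p(2,3)] by blast+
      ultimately have "fv (pf k \<phi>) \<subseteq> UU" "wf_fm L (pf k \<phi>)" by blast+
      then show ?thesis using p(1) unfolding \<Phi>_def by simp
    next
      case t
      have "range (uu k) \<subseteq> UU" unfolding UU_def using t(3) by (intro UN_upper) simp
      then show ?thesis using t unfolding \<Phi>_def by auto
    qed
  qed
  have e0ok: "okv L M (UU - W) e0" unfolding e0_def using vof_ok[OF E0ok] .
  have inW: "\<And>k i. 0 < k \<Longrightarrow> k < n \<Longrightarrow> uu k i \<in> W" unfolding W_def by auto
  have notW: "\<And>k i. k \<le> n \<Longrightarrow> uu k i \<notin> W \<Longrightarrow> k = 0 \<or> k = n"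
    using inW by (metis le_neq_implies_less neq0_conv)
  have WU: "\<And>w. w \<in> W \<Longrightarrow> \<exists>k i. 0 < k \<and> k < n \<and> w = uu k i" unfolding W_def by auto
  have Wn: "\<And>k i. k \<le> n \<Longrightarrow> (k = 0 \<or> k = n) \<Longrightarrow> uu k i \<notin> W"
  proof
    fix k i assume k: "k \<le> n" "k = 0 \<or> k = n" "uu k i \<in> W"
    then obtain k' i' where "0 < k'" "k' < n" "uu k i = uu k' i'" using WU by blast
    then show False using uu_eq[of k k' i i'] k by auto
  qed
  have fin: "\<forall>J0. J0 \<subseteq> J \<and> finite J0 \<longrightarrow>
       (\<exists>v. okv L M W v \<and> (\<forall>w. w \<notin> W \<longrightarrow> v w = e0 w) \<and> (\<forall>j\<in>J0. sat L M v (\<Phi> j)))"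
  proof (intro allI impI)
    fix J0 assume J0: "J0 \<subseteq> J \<and> finite J0"
    define F where "F k = CP k -` J0" for k
    have F: "\<forall>k<n. F k \<subseteq> \<pi> k \<and> finite (F k)"
    proof (intro allI impI conjI)
      fix k assume "k < n"
      show "F k \<subseteq> \<pi> k" using J0 unfolding F_def J_def by auto
      show "finite (F k)" unfolding F_def using J0 by (intro finite_vimageI) (auto simp: inj_on_def)
    qed
    obtain h where h: "h 0 = \<sigma>" "h n = id" "\<forall>k\<le>n. h k \<in> Aut L M"
       "\<forall>k<n. prs L M x y (F k) (\<epsilon> k) (ginv M (h (Suc k)) \<circ> a) (ginv M (h k) \<circ> a)"
      using famF[OF F] by blast
    define E where "E (k::nat) = ginv M (h k) \<circ> a" for k
    define v where "v = vof E"
    have Eok: "\<forall>k\<le>n. tupok L M x (E k)"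
      unfolding E_def using h(3) ginv_Aut wf tupok_aut atup by blast
    have vu: "\<And>k. k \<le> n \<Longrightarrow> v \<circ> uu k = ginv M (h k) \<circ> a" unfolding v_def using vof_comp E_def by (simp add: comp_def)
    have "okv L M W v" unfolding v_def using vof_ok[OF Eok] .
    moreover have "\<forall>w. w \<notin> W \<longrightarrow> v w = e0 w"
    proof (intro allI impI)
      fix w assume w: "w \<notin> W"
      show "v w = e0 w"
      proof (cases "w \<in> UU")
        case True
        then obtain k i where ki: "k \<le> n" "w = uu k i" unfolding UU_def by blast
        then have "k = 0 \<or> k = n" using notW w by blast
        then have "E k = E0 k" unfolding E_def E0_def using h(1,2) n1 ginv_id[of M] by auto
        then show ?thesis unfolding v_def e0_def using vof_uu[OF ki(1)] ki(2) by simp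
      next
        case False then show ?thesis unfolding v_def e0_def using vof_notU by simp
      qed
    qed
    moreover have "\<forall>j\<in>J0. sat L M v (\<Phi> j)"
    proof
      fix j assume j: "j \<in> J0"
      then have "j \<in> J" using J0 by blast
      then consider (p) k \<phi> where "j = CP k \<phi>" "k < n" "\<phi> \<in> \<pi> k"
        | (t) k \<chi> where "j = CT k \<chi>" "0 < k" "k < n" "wf_fm L \<chi>" "fv \<chi> \<subseteq> range (uu k)" "sat L M (asgu k a) \<chi>"
        unfolding J_def by blast
      then show "sat L M v (\<Phi> j)"
      proof cases
        case p
        have "\<phi> \<in> F k" using j p(1) unfolding F_def by simp
        then have "prs L M x y {\<phi>} (\<epsilon> k) (v \<circ> uu (Suc k)) (v \<circ> uu k)"
          using h(4) p(2) vu[of k] vu[of "Suc k"] unfolding prs_def by (auto split: if_splits)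
        then show ?thesis using pf[OF p(2,3)] p(1) unfolding \<Phi>_def prs_def by (auto split: if_splits)
      next
        case t
        have gA: "ginv M (h k) \<in> Aut L M" using ginv_Aut[of "h k" L M] h(3) t(3) wf by simp
        have "okv L M (range (uu k)) (asgu k a)" using asgu_ok[of k a] atup t(3) by simp
        then have "okv L M (fv \<chi>) (asgu k a)" using t(5) unfolding okv_def by blast
        then have "sat L M (ginv M (h k) \<circ> asgu k a) \<chi> = sat L M (asgu k a) \<chi>"
          by (rule sat_aut[OF gA wf t(4)])
        moreover have "sat L M v \<chi> = sat L M (ginv M (h k) \<circ> asgu k a) \<chi>"
        proof (rule sat_cong, intro ballI)
          fix z assume "z \<in> fv \<chi>"
          then obtain i where i: "z = uu k i" using t(5) by blast
          have "v (uu k i) = (ginv M (h k) \<circ> a) i" using vu[of k] t(3) by (metis comp_apply less_imp_le)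
          then show "v z = (ginv M (h k) \<circ> asgu k a) z" using i asgu_uu[of k a i] t(3) by simp
        qed
        ultimately show ?thesis using t(1,6) unfolding \<Phi>_def by simp
      qed
    qed
    ultimately show "\<exists>v. okv L M W v \<and> (\<forall>w. w \<notin> W \<longrightarrow> v w = e0 w) \<and> (\<forall>j\<in>J0. sat L M v (\<Phi> j))"
      by blast
  qed
  obtain v where v: "okv L M W v" "\<forall>w. w \<notin> W \<longrightarrow> v w = e0 w" "\<forall>j\<in>J. sat L M v (\<Phi> j)"
    using realize[OF satd wf inf _ WV fvs e0ok fin] VVs subset_lesspoll[of UU "UU \<union> Av" K] by blast
  have hk: "\<And>k. 0 < k \<Longrightarrow> k < n \<Longrightarrow> \<exists>g\<in>Aut L M. \<forall>i. ginv M g (a i) = v (uu k i)"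
  proof -
    fix k assume k: "0 < k" "k < n"
    have vok: "okv L M (range (uu k)) v"
      using v(1) inW[OF k] unfolding okv_def by blast
    have tp: "\<forall>\<chi>. wf_fm L \<chi> \<and> fv \<chi> \<subseteq> range (uu k) \<and> sat L M (asgu k a) \<chi> \<longrightarrow> sat L M v \<chi>"
    proof (intro allI impI)
      fix \<chi> assume c: "wf_fm L \<chi> \<and> fv \<chi> \<subseteq> range (uu k) \<and> sat L M (asgu k a) \<chi>"
      then have "CT k \<chi> \<in> J" unfolding J_def using k by blast
      then show "sat L M v \<chi>" using v(3) unfolding \<Phi>_def by fastforce
    qed
    show "\<exists>g\<in>Aut L M. \<forall>i. ginv M g (a i) = v (uu k i)" using get_hk[OF _ vok tp] k by simp
  qed
  define hh where "hh k = (SOME g. g \<in> Aut L M \<and> (\<forall>i. ginv M g (a i) = v (uu k i)))" for k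
  have hh: "\<And>k. 0 < k \<Longrightarrow> k < n \<Longrightarrow> hh k \<in> Aut L M \<and> (\<forall>i. ginv M (hh k) (a i) = v (uu k i))"
  proof -
    fix k assume k: "0 < k" "k < n"
    then have "\<exists>g. g \<in> Aut L M \<and> (\<forall>i. ginv M g (a i) = v (uu k i))" using hk by blast
    then show "hh k \<in> Aut L M \<and> (\<forall>i. ginv M (hh k) (a i) = v (uu k i))"
      unfolding hh_def by (rule someI_ex)
  qed
  define h where "h k = (if k = 0 then \<sigma> else if k = n then id else hh k)" for k
  have hA: "\<forall>k\<le>n. h k \<in> Aut L M"
    unfolding h_def using \<sigma>A id_Aut hh by (auto simp: order.order_iff_strict)
  have hv: "\<And>k. k \<le> n \<Longrightarrow> ginv M (h k) \<circ> a = v \<circ> uu k"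
  proof -
    fix k assume k: "k \<le> n"
    show "ginv M (h k) \<circ> a = v \<circ> uu k"
    proof (cases "k = 0")
      case True
      have "\<And>i. v (uu 0 i) = e0 (uu 0 i)" using v(2) Wn[of 0] by simp
      then show ?thesis using True vof_uu[of 0 E0] unfolding h_def e0_def E0_def by auto
    next
      case k0: False
      show ?thesis
      proof (cases "k = n")
        case True
        have "\<And>i. v (uu n i) = e0 (uu n i)" using v(2) Wn[of n] by simp
        then show ?thesis using True k0 vof_uu[of n E0] ginv_id[of M] unfolding h_def e0_def E0_def by auto
      next
        case False
        then show ?thesis using hh[of k] k k0 unfolding h_def by auto
      qed
    qed
  qed
  have "\<forall>k<n. prs L M x y (\<pi> k) (\<epsilon> k) (ginv M (h (Suc k)) \<circ> a) (ginv M (h k) \<circ> a)"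
  proof (intro allI impI)
    fix k assume k: "k < n"
    have "\<forall>\<phi>\<in>\<pi> k. sat L M v (pf k \<phi>)"
    proof
      fix \<phi> assume "\<phi> \<in> \<pi> k"
      then have "CP k \<phi> \<in> J" unfolding J_def using k by blast
      then show "sat L M v (pf k \<phi>)" using v(3) unfolding \<Phi>_def by fastforce
    qed
    then show "prs L M x y (\<pi> k) (\<epsilon> k) (ginv M (h (Suc k)) \<circ> a) (ginv M (h k) \<circ> a)"
      using pf_prs[OF k] hv[of k] hv[of "Suc k"] k by simp
  qed
  moreover have "h 0 = \<sigma>" "h n = id" using n1 unfolding h_def by auto
  ultimately show ?thesis using core1[of n \<pi>, OF fm] hA by blast
qed

end


context st begin

lemma incl:
  assumes \<phi>: "\<forall>i<n. fm_in L x y (\<phi> i) \<and> entails L T (\<pi> i) (\<phi> i) TYPE('a)"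
  shows "setprods M (\<lambda>i. A_set L M (\<pi> i) x y a) \<epsilon> n \<subseteq> setprods M (\<lambda>i. A_set L M {\<phi> i} x y a) \<epsilon> n"
proof
  fix \<sigma> assume "\<sigma> \<in> setprods M (\<lambda>i. A_set L M (\<pi> i) x y a) \<epsilon> n"
  then obtain \<tau> where \<tau>: "\<forall>k<n. \<tau> k \<in> A_set L M (\<pi> k) x y a" "\<sigma> = gprod M \<tau> \<epsilon> n"
    unfolding setprods_iff by blast
  have "\<forall>k<n. \<tau> k \<in> A_set L M {\<phi> k} x y a"
  proof (intro allI impI)
    fix k assume k: "k < n"
    have tA: "\<tau> k \<in> Aut L M" and ts: "\<forall>\<psi>\<in>\<pi> k. sat L M (tup_asg x y (\<tau> k) a) \<psi>"
      using \<tau>(1) k unfolding A_set_def by auto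
    define v' where "v' z = (if z \<in> range x \<union> range y then tup_asg x y (\<tau> k) a z else dflt z)" for z
    have "assignment L M v'"
      unfolding assignment_def
    proof
      fix z
      show "v' z \<in> carr M \<and> esort M (v' z) = vsort L z"
      proof (cases "z \<in> range x \<union> range y")
        case True
        have "tupok L M x (\<tau> k \<circ> a)" using tupok_aut[OF tA atup] .
        then have "okv L M (range x \<union> range y) (asg2 x y (\<tau> k \<circ> a) a)"
          using okv_asg2[OF ix iy dj vs _ atup] by blast
        then show ?thesis using True unfolding v'_def okv_def tup_asg_asg2 by auto
      next
        case False then show ?thesis using dflt_ok[of UNIV] unfolding v'_def okv_def by auto
      qed
    qed
    moreover have "is_model L M T" using mon unfolding monster_def by blast
    moreover have "\<forall>\<psi>\<in>\<pi> k. sat L M v' \<psi>"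
    proof
      fix \<psi> assume p: "\<psi> \<in> \<pi> k"
      have "sat L M v' \<psi> = sat L M (tup_asg x y (\<tau> k) a) \<psi>"
        by (rule sat_cong) (use fm k p in \<open>auto simp: v'_def fm_in_def\<close>)
      then show "sat L M v' \<psi>" using ts p by simp
    qed
    ultimately have "sat L M v' (\<phi> k)" using \<phi> k unfolding entails_def by blast
    moreover have "sat L M v' (\<phi> k) = sat L M (tup_asg x y (\<tau> k) a) (\<phi> k)"
      by (rule sat_cong) (use \<phi> k in \<open>auto simp: v'_def fm_in_def\<close>)
    ultimately show "\<tau> k \<in> A_set L M {\<phi> k} x y a" using tA unfolding A_set_def by simp
  qed
  then show "\<sigma> \<in> setprods M (\<lambda>i. A_set L M {\<phi> i} x y a) \<epsilon> n"
    unfolding setprods_iff using \<tau>(2) by blast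
qed

end


context st begin

lemma part_ii:
  assumes n1: "1 \<le> n" and \<psi>: "wf_fm L \<psi>" and Avd: "Av = fv \<psi>"
    and dd: "\<forall>z\<in>fv \<psi> \<inter> U. dd z \<in> carr M \<and> esort M (dd z) = vsort L z"
    and pp: "\<forall>z\<in>fv \<psi> - U. pp z \<in> carr M \<and> esort M (pp z) = vsort L z"
    and Adef: "A = {\<sigma>\<in>Aut L M. sat L M (\<lambda>z. if z \<in> U then \<sigma> (dd z) else pp z) \<psi>}"
    and sub: "setprods M (\<lambda>i. A_set L M (\<pi> i) x y a) \<epsilon> n \<subseteq> A"
  shows "\<exists>\<phi>. (\<forall>i<n. fm_in L x y (\<phi> i) \<and> entails L T (\<pi> i) (\<phi> i) TYPE('a)) \<and>
                setprods M (\<lambda>i. A_set L M {\<phi> i} x y a) \<epsilon> n \<subseteq> A"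
proof (rule ccontr)
  assume nope: "\<not> ?thesis"
  note core1 = core[OF ix iy dj vs wf atup]
  define Q where "Q = fv \<psi> - U"
  define Aa where "Aa \<sigma> = (\<lambda>z. if z \<in> U then \<sigma> (dd z) else pp z)" for \<sigma> :: "'a \<Rightarrow> 'a"
  have famF: "\<And>F. (\<forall>k<n. F k \<subseteq> \<pi> k \<and> finite (F k)) \<Longrightarrow>
      \<exists>\<sigma> h. \<sigma> \<in> Aut L M \<and> \<not> sat L M (Aa \<sigma>) \<psi> \<and> h 0 = \<sigma> \<and> h n = id \<and> (\<forall>k\<le>n. h k \<in> Aut L M) \<and>
       (\<forall>k<n. prs L M x y (F k) (\<epsilon> k) (ginv M (h (Suc k)) \<circ> a) (ginv M (h k) \<circ> a))"
  proof -
    fix F assume F: "\<forall>k<n. F k \<subseteq> \<pi> k \<and> finite (F k)"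
    have c: "\<forall>i<n. fm_in L x y (conjl (lst (F i))) \<and> entails L T (\<pi> i) (conjl (lst (F i))) TYPE('a)"
      using fam_ok F by blast
    have "\<not> setprods M (\<lambda>i. A_set L M {conjl (lst (F i))} x y a) \<epsilon> n \<subseteq> A"
    proof
      assume s: "setprods M (\<lambda>i. A_set L M {conjl (lst (F i))} x y a) \<epsilon> n \<subseteq> A"
      have "\<exists>\<phi>. (\<forall>i<n. fm_in L x y (\<phi> i) \<and> entails L T (\<pi> i) (\<phi> i) TYPE('a)) \<and>
                setprods M (\<lambda>i. A_set L M {\<phi> i} x y a) \<epsilon> n \<subseteq> A"
        using c s by (intro exI[of _ "\<lambda>i. conjl (lst (F i))"]) simp
      then show False using nope by blast
    qed
    then obtain \<sigma> where \<sigma>: "\<sigma> \<in> setprods M (\<lambda>i. A_set L M {conjl (lst (F i))} x y a) \<epsilon> n" "\<sigma> \<notin> A"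
      by blast
    moreover have "\<forall>k<n. \<forall>\<phi>\<in>{conjl (lst (F k))}. fm_in L x y \<phi>"
      using c by blast
    ultimately obtain h where h: "h 0 = \<sigma>" "h n = id" "\<forall>k\<le>n. h k \<in> Aut L M"
       "\<forall>k<n. prs L M x y {conjl (lst (F k))} (\<epsilon> k) (ginv M (h (Suc k)) \<circ> a) (ginv M (h k) \<circ> a)"
      using core1[of n "\<lambda>k. {conjl (lst (F k))}"] by blast
    have "\<forall>k<n. prs L M x y (F k) (\<epsilon> k) (ginv M (h (Suc k)) \<circ> a) (ginv M (h k) \<circ> a)"
      using h(4) F prs_conjl by blast
    moreover have "\<sigma> \<in> Aut L M" using h(1,3) by auto
    moreover have "\<not> sat L M (Aa \<sigma>) \<psi>" using \<sigma>(2) \<open>\<sigma> \<in> Aut L M\<close> unfolding Adef Aa_def by blast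
    ultimately show "\<exists>\<sigma> h. \<sigma> \<in> Aut L M \<and> \<not> sat L M (Aa \<sigma>) \<psi> \<and> h 0 = \<sigma> \<and> h n = id \<and> (\<forall>k\<le>n. h k \<in> Aut L M) \<and>
       (\<forall>k<n. prs L M x y (F k) (\<epsilon> k) (ginv M (h (Suc k)) \<circ> a) (ginv M (h k) \<circ> a))"
      using h by blast
  qed
  define c0 where "c0 z = (if z \<in> Q then pp z else asgu 0 a z)" for z
  define J where "J = {CP k \<phi> | k \<phi>. k < n \<and> \<phi> \<in> \<pi> k} \<union>
     {CT k \<chi> | k \<chi>. 0 < k \<and> k < n \<and> wf_fm L \<chi> \<and> fv \<chi> \<subseteq> range (uu k) \<and> sat L M (asgu k a) \<chi>} \<union>
     {CT0 \<chi> | \<chi>. wf_fm L \<chi> \<and> fv \<chi> \<subseteq> range (uu 0) \<union> Q \<and> sat L M c0 \<chi>} \<union> {CN}"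
  define \<Phi> where "\<Phi> j = (case j of CP k \<phi> \<Rightarrow> pf k \<phi> | CT k \<chi> \<Rightarrow> \<chi> | CT0 \<chi> \<Rightarrow> \<chi> | CN \<Rightarrow> FNeg \<psi>)" for j
  define W where "W = (\<Union>k\<in>{k. k < n}. range (uu k)) \<union> Q"
  define e0 where "e0 z = (if z \<in> fv \<psi> \<inter> U then dd z else vof (\<lambda>_. a) z)" for z
  have ufv: "\<And>k i. k \<le> n \<Longrightarrow> uu k i \<notin> fv \<psi>" using uav Avd by blast
  have QW: "Q \<subseteq> W" unfolding W_def by blast
  have inW: "\<And>k i. k < n \<Longrightarrow> uu k i \<in> W" unfolding W_def by auto
  have WU: "\<And>w. w \<in> W \<Longrightarrow> w \<in> Q \<or> (\<exists>k i. k < n \<and> w = uu k i)" unfolding W_def by auto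
  have unW: "\<And>i. uu n i \<notin> W"
  proof
    fix i assume "uu n i \<in> W"
    then consider "uu n i \<in> Q" | k i' where "k < n" "uu n i = uu k i'" using WU by blast
    then show False
    proof cases
      case 1 then show False using ufv[of n i] unfolding Q_def by blast
    next
      case 2 then show False using uu_eq[of n k i i'] by simp
    qed
  qed
  have WV: "W \<subseteq> UU \<union> Av"
  proof -
    have "(\<Union>k\<in>{k. k < n}. range (uu k)) \<subseteq> UU" unfolding UU_def by (rule UN_mono) auto
    then show ?thesis unfolding W_def Q_def Avd by blast
  qed
  have fvs: "\<forall>j\<in>J. wf_fm L (\<Phi> j) \<and> fv (\<Phi> j) \<subseteq> UU \<union> Av"
  proof
    fix j assume "j \<in> J"
    then consider (p) k \<phi> where "j = CP k \<phi>" "k < n" "\<phi> \<in> \<pi> k"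
      | (t) k \<chi> where "j = CT k \<chi>" "0 < k" "k < n" "wf_fm L \<chi>" "fv \<chi> \<subseteq> range (uu k)"
      | (t0) \<chi> where "j = CT0 \<chi>" "wf_fm L \<chi>" "fv \<chi> \<subseteq> range (uu 0) \<union> Q"
      | (cn) "j = CN"
      unfolding J_def by blast
    then show "wf_fm L (\<Phi> j) \<and> fv (\<Phi> j) \<subseteq> UU \<union> Av"
    proof cases
      case p
      have "range (uu (Suc k)) \<subseteq> UU" "range (uu k) \<subseteq> UU" unfolding UU_def using p(2)
        by (intro UN_upper, simp)+
      moreover have "fv (pf k \<phi>) \<subseteq> range (uu (Suc k)) \<union> range (uu k)" "wf_fm L (pf k \<phi>)"
        using pf[OF p(2,3)] by blast+
      ultimately have "fv (pf k \<phi>) \<subseteq> UU" "wf_fm L (pf k \<phi>)" by blast+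
      then show ?thesis using p(1) unfolding \<Phi>_def by auto
    next
      case t
      have "range (uu k) \<subseteq> UU" unfolding UU_def using t(3) by (intro UN_upper) simp
      then show ?thesis using t unfolding \<Phi>_def by auto
    next
      case t0
      have "range (uu 0) \<subseteq> UU" unfolding UU_def by (intro UN_upper) simp
      then show ?thesis using t0 unfolding \<Phi>_def Q_def Avd by auto
    next
      case cn then show ?thesis using \<psi> Avd unfolding \<Phi>_def by auto
    qed
  qed
  have aok2: "\<forall>k\<le>n. tupok L M x ((\<lambda>_. a) k)" using atup by simp
  have e0ok: "okv L M (UU \<union> Av - W) e0"
    unfolding okv_def
  proof
    fix z assume z: "z \<in> UU \<union> Av - W"
    show "e0 z \<in> carr M \<and> esort M (e0 z) = vsort L z"
    proof (cases "z \<in> fv \<psi> \<inter> U")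
      case True then show ?thesis using dd unfolding e0_def by simp
    next
      case False
      have "vof (\<lambda>_. a) z \<in> carr M \<and> esort M (vof (\<lambda>_. a) z) = vsort L z"
        using vof_ok[OF aok2, of UNIV] unfolding okv_def by blast
      moreover have "e0 z = vof (\<lambda>_. a) z" using False unfolding e0_def by (rule if_not_P)
      ultimately show ?thesis by simp
    qed
  qed
  have ppQ: "\<forall>z\<in>Q. pp z \<in> carr M \<and> esort M (pp z) = vsort L z" using pp unfolding Q_def by blast
  have c0ok: "okv L M (range (uu 0) \<union> Q) c0"
    unfolding okv_def
  proof
    fix z assume z: "z \<in> range (uu 0) \<union> Q"
    show "c0 z \<in> carr M \<and> esort M (c0 z) = vsort L z"
    proof (cases "z \<in> Q")
      case True then show ?thesis using ppQ unfolding c0_def by simp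
    next
      case False
      then have "z \<in> range (uu 0)" using z by blast
      then obtain i where i: "z = uu 0 i" by blast
      then show ?thesis using asgu_ok[of 0 a] atup False unfolding c0_def okv_def by auto
    qed
  qed
  have fin: "\<forall>J0. J0 \<subseteq> J \<and> finite J0 \<longrightarrow>
       (\<exists>v. okv L M W v \<and> (\<forall>w. w \<notin> W \<longrightarrow> v w = e0 w) \<and> (\<forall>j\<in>J0. sat L M v (\<Phi> j)))"
  proof (intro allI impI)
    fix J0 assume J0: "J0 \<subseteq> J \<and> finite J0"
    define F where "F k = CP k -` J0" for k
    have F: "\<forall>k<n. F k \<subseteq> \<pi> k \<and> finite (F k)"
    proof (intro allI impI conjI)
      fix k assume "k < n"
      show "F k \<subseteq> \<pi> k" using J0 unfolding F_def J_def by auto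
      show "finite (F k)" unfolding F_def using J0 by (intro finite_vimageI) (auto simp: inj_on_def)
    qed
    obtain \<sigma> h where h: "\<sigma> \<in> Aut L M" "\<not> sat L M (Aa \<sigma>) \<psi>" "h 0 = \<sigma>" "h n = id" "\<forall>k\<le>n. h k \<in> Aut L M"
       "\<forall>k<n. prs L M x y (F k) (\<epsilon> k) (ginv M (h (Suc k)) \<circ> a) (ginv M (h k) \<circ> a)"
      using famF[OF F] by blast
    have gsA: "ginv M \<sigma> \<in> Aut L M" using ginv_Aut[OF h(1) wf] .
    define E where "E (k::nat) = ginv M (h k) \<circ> a" for k
    define v where "v z = (if z \<in> fv \<psi> \<inter> U then dd z else if z \<in> Q then ginv M \<sigma> (pp z) else vof E z)" for z
    have Eok: "\<forall>k\<le>n. tupok L M x (E k)"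
      unfolding E_def using h(5) ginv_Aut wf tupok_aut atup by blast
    have vuu: "\<And>k i. k \<le> n \<Longrightarrow> v (uu k i) = ginv M (h k) (a i)"
      using ufv vof_uu unfolding v_def Q_def E_def by auto
    have vu: "\<And>k. k \<le> n \<Longrightarrow> v \<circ> uu k = ginv M (h k) \<circ> a" using vuu by fastforce
    have vQ: "\<And>z. z \<in> Q \<Longrightarrow> v z = ginv M \<sigma> (pp z)" unfolding v_def Q_def by auto
    have vnU: "\<And>w. w \<notin> fv \<psi> \<inter> U \<Longrightarrow> w \<notin> Q \<Longrightarrow> v w = vof E w" unfolding v_def by auto
    have e0nU: "\<And>w. w \<notin> fv \<psi> \<inter> U \<Longrightarrow> e0 w = vof (\<lambda>_. a) w" unfolding e0_def by auto
    have gpp: "\<And>z. z \<in> Q \<Longrightarrow> ginv M \<sigma> (pp z) \<in> carr M \<and> esort M (ginv M \<sigma> (pp z)) = vsort L z"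
      using ppQ AutD(1,3)[OF gsA] by (auto simp: bij_betw_def)
    have "okv L M W v"
      unfolding okv_def
    proof
      fix w assume "w \<in> W"
      then consider "w \<in> Q" | k i where "k < n" "w = uu k i" using WU by blast
      then show "v w \<in> carr M \<and> esort M (v w) = vsort L w"
      proof cases
        case 1 then show ?thesis using vQ gpp by simp
      next
        case 2 then show ?thesis using vuu[of k i] Eok usort unfolding E_def tupok_def by simp
      qed
    qed
    moreover have "\<forall>w. w \<notin> W \<longrightarrow> v w = e0 w"
    proof (intro allI impI)
      fix w assume w: "w \<notin> W"
      show "v w = e0 w"
      proof (cases "w \<in> fv \<psi> \<inter> U")
        case True then show ?thesis unfolding v_def e0_def by simp
      next
        case nU: False
        then have nQ: "w \<notin> Q" using w QW by blast
        show ?thesis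
        proof (cases "w \<in> UU")
          case True
          then obtain k i where ki: "k \<le> n" "w = uu k i" unfolding UU_def by blast
          then have "k = n" using inW w by (metis le_neq_implies_less)
          then have "E k = a" unfolding E_def using h(4) ginv_id[of M] by simp
          then show ?thesis using vnU[OF nU nQ] e0nU[OF nU] ki vof_uu[OF ki(1), of E] vof_uu[OF ki(1), of "\<lambda>_. a"]
            by simp
        next
          case False then show ?thesis using vnU[OF nU nQ] e0nU[OF nU] vof_notU by simp
        qed
      qed
    qed
    moreover have "\<forall>j\<in>J0. sat L M v (\<Phi> j)"
    proof
      fix j assume j: "j \<in> J0"
      then have "j \<in> J" using J0 by blast
      then consider (p) k \<phi> where "j = CP k \<phi>" "k < n" "\<phi> \<in> \<pi> k"
        | (t) k \<chi> where "j = CT k \<chi>" "0 < k" "k < n" "wf_fm L \<chi>" "fv \<chi> \<subseteq> range (uu k)" "sat L M (asgu k a) \<chi>"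
        | (t0) \<chi> where "j = CT0 \<chi>" "wf_fm L \<chi>" "fv \<chi> \<subseteq> range (uu 0) \<union> Q" "sat L M c0 \<chi>"
        | (cn) "j = CN"
        unfolding J_def by blast
      then show "sat L M v (\<Phi> j)"
      proof cases
        case p
        have "\<phi> \<in> F k" using j p(1) unfolding F_def by simp
        then have "prs L M x y {\<phi>} (\<epsilon> k) (v \<circ> uu (Suc k)) (v \<circ> uu k)"
          using h(6) p(2) vu[of k] vu[of "Suc k"] unfolding prs_def by (auto split: if_splits)
        then show ?thesis using pf[OF p(2,3)] p(1) unfolding \<Phi>_def prs_def by (auto split: if_splits)
      next
        case t
        have gA: "ginv M (h k) \<in> Aut L M" using ginv_Aut[of "h k" L M] h(5) t(3) wf by simp
        have "okv L M (range (uu k)) (asgu k a)" using asgu_ok[of k a] atup t(3) by simp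
        then have "okv L M (fv \<chi>) (asgu k a)" using t(5) unfolding okv_def by blast
        then have "sat L M (ginv M (h k) \<circ> asgu k a) \<chi> = sat L M (asgu k a) \<chi>"
          by (rule sat_aut[OF gA wf t(4)])
        moreover have "sat L M v \<chi> = sat L M (ginv M (h k) \<circ> asgu k a) \<chi>"
        proof (rule sat_cong, intro ballI)
          fix z assume "z \<in> fv \<chi>"
          then obtain i where i: "z = uu k i" using t(5) by blast
          then show "v z = (ginv M (h k) \<circ> asgu k a) z" using vuu[of k i] asgu_uu[of k a i] t(3) by simp
        qed
        ultimately show ?thesis using t(1,6) unfolding \<Phi>_def by simp
      next
        case t0
        have "okv L M (fv \<chi>) c0" using c0ok t0(3) unfolding okv_def by blast
        then have "sat L M (ginv M \<sigma> \<circ> c0) \<chi> = sat L M c0 \<chi>"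
          by (rule sat_aut[OF gsA wf t0(2)])
        moreover have "sat L M v \<chi> = sat L M (ginv M \<sigma> \<circ> c0) \<chi>"
        proof (rule sat_cong, intro ballI)
          fix z assume "z \<in> fv \<chi>"
          then consider i where "z = uu 0 i" | "z \<in> Q" using t0(3) by blast
          then show "v z = (ginv M \<sigma> \<circ> c0) z"
          proof cases
            case 1
            have "z \<notin> Q" using ufv[of 0 i] 1 unfolding Q_def by blast
            then show ?thesis using 1 vuu[of 0 i] asgu_uu[of 0 a i] h(3) unfolding c0_def by simp
          next
            case 2 then show ?thesis using vQ unfolding c0_def by simp
          qed
        qed
        ultimately show ?thesis using t0(1,4) unfolding \<Phi>_def by simp
      next
        case cn
        have okp: "okv L M (fv \<psi>) v"
          unfolding okv_def
        proof
          fix z assume z: "z \<in> fv \<psi>"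
          show "v z \<in> carr M \<and> esort M (v z) = vsort L z"
          proof (cases "z \<in> U")
            case True then show ?thesis using dd z unfolding v_def by simp
          next
            case False
            then have "z \<in> Q" using z unfolding Q_def by blast
            then show ?thesis using vQ gpp by simp
          qed
        qed
        have "sat L M (\<sigma> \<circ> v) \<psi> = sat L M v \<psi>" by (rule sat_aut[OF h(1) wf \<psi> okp])
        moreover have "sat L M (\<sigma> \<circ> v) \<psi> = sat L M (Aa \<sigma>) \<psi>"
        proof (rule sat_cong, intro ballI)
          fix z assume z: "z \<in> fv \<psi>"
          show "(\<sigma> \<circ> v) z = Aa \<sigma> z"
          proof (cases "z \<in> U")
            case True then show ?thesis using z unfolding v_def Aa_def by simp
          next
            case False
            then have "z \<in> Q" using z unfolding Q_def by blast
            then show ?thesis using vQ ginv_right_pt[OF h(1)] False unfolding Aa_def by simp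
          qed
        qed
        ultimately show ?thesis using h(2) cn unfolding \<Phi>_def by simp
      qed
    qed
    ultimately show "\<exists>v. okv L M W v \<and> (\<forall>w. w \<notin> W \<longrightarrow> v w = e0 w) \<and> (\<forall>j\<in>J0. sat L M v (\<Phi> j))"
      by blast
  qed
  obtain v where v: "okv L M W v" "\<forall>w. w \<notin> W \<longrightarrow> v w = e0 w" "\<forall>j\<in>J. sat L M v (\<Phi> j)"
    using realize[OF satd wf inf VVs WV fvs e0ok fin] by blast
  have hk: "\<And>k. 0 < k \<Longrightarrow> k < n \<Longrightarrow> \<exists>g\<in>Aut L M. \<forall>i. ginv M g (a i) = v (uu k i)"
  proof -
    fix k assume k: "0 < k" "k < n"
    have vok: "okv L M (range (uu k)) v"
      using v(1) inW[OF k(2)] unfolding okv_def by blast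
    have tp: "\<forall>\<chi>. wf_fm L \<chi> \<and> fv \<chi> \<subseteq> range (uu k) \<and> sat L M (asgu k a) \<chi> \<longrightarrow> sat L M v \<chi>"
    proof (intro allI impI)
      fix \<chi> assume c: "wf_fm L \<chi> \<and> fv \<chi> \<subseteq> range (uu k) \<and> sat L M (asgu k a) \<chi>"
      then have "CT k \<chi> \<in> J" unfolding J_def using k by blast
      then show "sat L M v \<chi>" using v(3) unfolding \<Phi>_def by fastforce
    qed
    show "\<exists>g\<in>Aut L M. \<forall>i. ginv M g (a i) = v (uu k i)" using get_hk[OF _ vok tp] k by simp
  qed
  define hh where "hh k = (SOME g. g \<in> Aut L M \<and> (\<forall>i. ginv M g (a i) = v (uu k i)))" for k
  have hh: "\<And>k. 0 < k \<Longrightarrow> k < n \<Longrightarrow> hh k \<in> Aut L M \<and> (\<forall>i. ginv M (hh k) (a i) = v (uu k i))"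
  proof -
    fix k assume k: "0 < k" "k < n"
    then have "\<exists>g. g \<in> Aut L M \<and> (\<forall>i. ginv M g (a i) = v (uu k i))" using hk by blast
    then show "hh k \<in> Aut L M \<and> (\<forall>i. ginv M (hh k) (a i) = v (uu k i))"
      unfolding hh_def by (rule someI_ex)
  qed
  have W0s: "range (uu 0) \<union> Q \<prec> K"
    using finite_Un_lesspoll[OF inf range_small, of "Q" 0] finite_fv[of \<psi>] unfolding Q_def by simp
  have v0ok: "okv L M (range (uu 0) \<union> Q) v"
    using v(1) inW[of 0] n1 QW unfolding okv_def by auto
  have tp0: "\<forall>\<chi>. wf_fm L \<chi> \<and> fv \<chi> \<subseteq> range (uu 0) \<union> Q \<and> sat L M v \<chi> \<longrightarrow> sat L M c0 \<chi>"
  proof (intro allI impI)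
    fix \<chi> :: "('f,'r,'v) fm" assume c: "wf_fm L \<chi> \<and> fv \<chi> \<subseteq> range (uu 0) \<union> Q \<and> sat L M v \<chi>"
    show "sat L M c0 \<chi>"
    proof (rule ccontr)
      assume "\<not> sat L M c0 \<chi>"
      then have "CT0 (FNeg \<chi>) \<in> J" unfolding J_def using c by auto
      then have "sat L M v (FNeg \<chi>)" using v(3) unfolding \<Phi>_def by fastforce
      then show False using c by simp
    qed
  qed
  obtain \<sigma> where \<sigma>: "\<sigma> \<in> Aut L M" "\<forall>w\<in>range (uu 0) \<union> Q. \<sigma> (v w) = c0 w"
    using hom[OF sh wf inf sorts W0s v0ok c0ok tp0] by blast
  define h where "h k = (if k = 0 then \<sigma> else if k = n then id else hh k)" for k
  have hA: "\<forall>k\<le>n. h k \<in> Aut L M"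
    unfolding h_def using \<sigma>(1) id_Aut hh by (auto simp: order.order_iff_strict)
  have hv: "\<And>k. k \<le> n \<Longrightarrow> ginv M (h k) \<circ> a = v \<circ> uu k"
  proof -
    fix k assume k: "k \<le> n"
    show "ginv M (h k) \<circ> a = v \<circ> uu k"
    proof (cases "k = 0")
      case True
      have "\<And>i. \<sigma> (v (uu 0 i)) = a i"
      proof -
        fix i
        have "uu 0 i \<notin> Q" using ufv[of 0 i] unfolding Q_def by blast
        then show "\<sigma> (v (uu 0 i)) = a i" using \<sigma>(2) asgu_uu[of 0 a i] unfolding c0_def by simp
      qed
      then have "\<And>i. ginv M \<sigma> (a i) = v (uu 0 i)" using ginv_left_pt[OF \<sigma>(1)] by metis
      then show ?thesis using True unfolding h_def by auto
    next
      case k0: False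
      show ?thesis
      proof (cases "k = n")
        case True
        have "\<And>i. v (uu n i) = a i"
        proof -
          fix i
          have "v (uu n i) = e0 (uu n i)" using v(2) unW by blast
          also have "\<dots> = a i" using ufv[of n i] vof_uu[of n "\<lambda>_. a" i] unfolding e0_def by simp
          finally show "v (uu n i) = a i" .
        qed
        then show ?thesis using True k0 ginv_id[of M] unfolding h_def by auto
      next
        case False
        then show ?thesis using hh[of k] k k0 unfolding h_def by auto
      qed
    qed
  qed
  have "\<forall>k<n. prs L M x y (\<pi> k) (\<epsilon> k) (ginv M (h (Suc k)) \<circ> a) (ginv M (h k) \<circ> a)"
  proof (intro allI impI)
    fix k assume k: "k < n"
    have "\<forall>\<phi>\<in>\<pi> k. sat L M v (pf k \<phi>)"
    proof
      fix \<phi> assume "\<phi> \<in> \<pi> k"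
      then have "CP k \<phi> \<in> J" unfolding J_def using k by blast
      then show "sat L M v (pf k \<phi>)" using v(3) unfolding \<Phi>_def by fastforce
    qed
    then show "prs L M x y (\<pi> k) (\<epsilon> k) (ginv M (h (Suc k)) \<circ> a) (ginv M (h k) \<circ> a)"
      using pf_prs[OF k] hv[of k] hv[of "Suc k"] k by simp
  qed
  moreover have "h 0 = \<sigma>" "h n = id" using n1 unfolding h_def by auto
  ultimately have "\<sigma> \<in> setprods M (\<lambda>i. A_set L M (\<pi> i) x y a) \<epsilon> n"
    using core1[of n \<pi>, OF fm] hA by blast
  then have "\<sigma> \<in> A" using sub by blast
  then have sA: "sat L M (Aa \<sigma>) \<psi>" unfolding Adef Aa_def by blast
  have "CN \<in> J" unfolding J_def by blast
  then have nv: "\<not> sat L M v \<psi>" using v(3) unfolding \<Phi>_def by fastforce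
  have okp: "okv L M (fv \<psi>) v"
    unfolding okv_def
  proof
    fix z assume z: "z \<in> fv \<psi>"
    show "v z \<in> carr M \<and> esort M (v z) = vsort L z"
    proof (cases "z \<in> U")
      case True
      moreover have "\<And>k. k < n \<Longrightarrow> z \<notin> range (uu k)" using ufv z by (metis less_imp_le rangeE)
      ultimately have "z \<notin> W" unfolding W_def Q_def by blast
      then show ?thesis using v(2) dd z True unfolding e0_def by simp
    next
      case False
      then have "z \<in> W" using z QW unfolding Q_def by blast
      then show ?thesis using v(1) unfolding okv_def by blast
    qed
  qed
  have "sat L M (\<sigma> \<circ> v) \<psi> = sat L M v \<psi>" by (rule sat_aut[OF \<sigma>(1) wf \<psi> okp])
  moreover have "sat L M (\<sigma> \<circ> v) \<psi> = sat L M (Aa \<sigma>) \<psi>"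
  proof (rule sat_cong, intro ballI)
    fix z assume z: "z \<in> fv \<psi>"
    show "(\<sigma> \<circ> v) z = Aa \<sigma> z"
    proof (cases "z \<in> U")
      case True
      moreover have "\<And>k. k < n \<Longrightarrow> z \<notin> range (uu k)" using ufv z by (metis less_imp_le rangeE)
      ultimately have "z \<notin> W" unfolding W_def Q_def by blast
      then show ?thesis using v(2) True z unfolding e0_def Aa_def by simp
    next
      case False
      then have "z \<in> Q" using z unfolding Q_def by blast
      then show ?thesis using \<sigma>(2) False unfolding c0_def Aa_def by simp
    qed
  qed
  ultimately show False using sA nv by simp
qed

end


theorem corollary5p8:
  fixes L :: "('s,'f,'r,'v) lang" and T :: "('f,'r,'v) fm set"
    and M :: "('s,'f,'r,'a) struc" and K :: "'k set"
    and x y :: "'i \<Rightarrow> 'v" and a :: "'i \<Rightarrow> 'a"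
    and n :: nat and \<pi> :: "nat \<Rightarrow> ('f,'r,'v) fm set" and \<epsilon> :: "nat \<Rightarrow> int"
  assumes "monster L T M K"
    and "(UNIV :: 'i set) \<prec> K"
    and "inj x" and "inj y" and "range x \<inter> range y = {}"
    and "\<forall>i. vsort L (x i) = vsort L (y i)"
    and "\<forall>i. a i \<in> carr M \<and> esort M (a i) = vsort L (x i)"
    and "\<forall>i<n. \<forall>\<phi>\<in>\<pi> i. fm_in L x y \<phi>"
    and "\<forall>i<n. \<epsilon> i \<in> {-1, 1}"
  shows "(setprods M (\<lambda>i. A_set L M (\<pi> i) x y a) \<epsilon> n =
           \<Inter> {setprods M (\<lambda>i. A_set L M {\<phi> i} x y a) \<epsilon> n | \<phi>.
                 \<forall>i<n. fm_in L x y (\<phi> i) \<and> entails L T (\<pi> i) (\<phi> i) TYPE('a)}) \<and>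
         (\<forall>A. rel_definable L M A \<and> setprods M (\<lambda>i. A_set L M (\<pi> i) x y a) \<epsilon> n \<subseteq> A \<longrightarrow>
           (\<exists>\<phi>. (\<forall>i<n. fm_in L x y (\<phi> i) \<and> entails L T (\<pi> i) (\<phi> i) TYPE('a)) \<and>
                setprods M (\<lambda>i. A_set L M {\<phi> i} x y a) \<epsilon> n \<subseteq> A))"
proof -
  note as = assms
  have inf: "infinite K" using as(1) unfolding monster_def by blast
  have sorts: "\<forall>s. K \<lesssim> {z. vsort L z = s}" using as(1) unfolding monster_def by blast
  have stI: "\<And>S. S \<prec> K \<Longrightarrow> finite S \<Longrightarrow> \<exists>uu. st L T M K x y a n \<pi> uu S"
  proof -
    fix S :: "'v set" assume S: "S \<prec> K" "finite S"
    obtain uu where uu: "\<forall>k\<le>n. inj (uu k) \<and> range (uu k) \<inter> S = {}" "\<forall>k i. vsort L (uu k i) = vsort L (x i)"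
       "\<forall>k\<le>n. \<forall>k'\<le>n. k \<noteq> k' \<longrightarrow> range (uu k) \<inter> range (uu k') = {}" "(\<Union>k\<le>n. range (uu k)) \<prec> K"
      using uu_exists[OF as(2) inf sorts S(1), where x = x and m = n] by blast
    have "st L T M K x y a n \<pi> uu S"
      unfolding st_def
      by (intro conjI; (use as(1-8) uu S(2) in \<open>simp; fail\<close>)?; (use uu in blast)?)
    then show "\<exists>uu. st L T M K x y a n \<pi> uu S" by blast
  qed
  have e0: "{} \<prec> K" using finite_lesspoll_infinite[OF inf] by blast
  obtain uu0 where st0: "st L T M K x y a n \<pi> uu0 {}" using stI[OF e0] by blast
  have part1: "setprods M (\<lambda>i. A_set L M (\<pi> i) x y a) \<epsilon> n =
           \<Inter> {setprods M (\<lambda>i. A_set L M {\<phi> i} x y a) \<epsilon> n | \<phi>.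
                 \<forall>i<n. fm_in L x y (\<phi> i) \<and> entails L T (\<pi> i) (\<phi> i) TYPE('a)}"
  proof
    show "setprods M (\<lambda>i. A_set L M (\<pi> i) x y a) \<epsilon> n \<subseteq>
           \<Inter> {setprods M (\<lambda>i. A_set L M {\<phi> i} x y a) \<epsilon> n | \<phi>.
                 \<forall>i<n. fm_in L x y (\<phi> i) \<and> entails L T (\<pi> i) (\<phi> i) TYPE('a)}"
    proof (rule Inter_greatest)
      fix B assume "B \<in> {setprods M (\<lambda>i. A_set L M {\<phi> i} x y a) \<epsilon> n | \<phi>.
                 \<forall>i<n. fm_in L x y (\<phi> i) \<and> entails L T (\<pi> i) (\<phi> i) TYPE('a)}"
      then obtain \<phi> where "B = setprods M (\<lambda>i. A_set L M {\<phi> i} x y a) \<epsilon> n"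
        "\<forall>i<n. fm_in L x y (\<phi> i) \<and> entails L T (\<pi> i) (\<phi> i) TYPE('a)" by blast
      then show "setprods M (\<lambda>i. A_set L M (\<pi> i) x y a) \<epsilon> n \<subseteq> B" using st.incl[OF st0] by blast
    qed
  next
    show "\<Inter> {setprods M (\<lambda>i. A_set L M {\<phi> i} x y a) \<epsilon> n | \<phi>.
                 \<forall>i<n. fm_in L x y (\<phi> i) \<and> entails L T (\<pi> i) (\<phi> i) TYPE('a)}
          \<subseteq> setprods M (\<lambda>i. A_set L M (\<pi> i) x y a) \<epsilon> n"
    proof
      fix \<sigma> assume \<sigma>: "\<sigma> \<in> \<Inter> {setprods M (\<lambda>i. A_set L M {\<phi> i} x y a) \<epsilon> n | \<phi>.
                 \<forall>i<n. fm_in L x y (\<phi> i) \<and> entails L T (\<pi> i) (\<phi> i) TYPE('a)}"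
      show "\<sigma> \<in> setprods M (\<lambda>i. A_set L M (\<pi> i) x y a) \<epsilon> n"
      proof (cases "n = 0")
        case True
        have "setprods M (\<lambda>i. A_set L M {(\<lambda>_. ttrue) i} x y a) \<epsilon> n \<in> {setprods M (\<lambda>i. A_set L M {\<phi> i} x y a) \<epsilon> n | \<phi>.
                 \<forall>i<n. fm_in L x y (\<phi> i) \<and> entails L T (\<pi> i) (\<phi> i) TYPE('a)}" unfolding mem_Collect_eq using True by (intro exI[of _ "\<lambda>_. ttrue"]) simp
        then have "\<sigma> \<in> setprods M (\<lambda>i. A_set L M {ttrue} x y a) \<epsilon> n" by (rule InterD[OF \<sigma>])
        then show ?thesis using True by simp
      next
        case False
        then show ?thesis using st.part_i[OF st0 _ \<sigma>] by simp
      qed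
    qed
  qed
  have part2: "\<forall>A. rel_definable L M A \<and> setprods M (\<lambda>i. A_set L M (\<pi> i) x y a) \<epsilon> n \<subseteq> A \<longrightarrow>
           (\<exists>\<phi>. (\<forall>i<n. fm_in L x y (\<phi> i) \<and> entails L T (\<pi> i) (\<phi> i) TYPE('a)) \<and>
                setprods M (\<lambda>i. A_set L M {\<phi> i} x y a) \<epsilon> n \<subseteq> A)"
  proof (intro allI impI)
    fix A assume A: "rel_definable L M A \<and> setprods M (\<lambda>i. A_set L M (\<pi> i) x y a) \<epsilon> n \<subseteq> A"
    show "\<exists>\<phi>. (\<forall>i<n. fm_in L x y (\<phi> i) \<and> entails L T (\<pi> i) (\<phi> i) TYPE('a)) \<and>
                setprods M (\<lambda>i. A_set L M {\<phi> i} x y a) \<epsilon> n \<subseteq> A"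
    proof (cases "n = 0")
      case True
      then show ?thesis using A by (intro exI[of _ "\<lambda>_. ttrue"]) simp
    next
      case False
      obtain \<psi> U d e where \<psi>: "wf_fm L \<psi>"
        "\<forall>z\<in>fv \<psi> \<inter> U. d z \<in> carr M \<and> esort M (d z) = vsort L z"
        "\<forall>z\<in>fv \<psi> - U. e z \<in> carr M \<and> esort M (e z) = vsort L z"
        "A = {\<sigma>\<in>Aut L M. sat L M (\<lambda>z. if z \<in> U then \<sigma> (d z) else e z) \<psi>}"
        using A unfolding rel_definable_def by blast
      have "fv \<psi> \<prec> K" using finite_lesspoll_infinite[OF inf finite_fv] .
      then obtain uu where stp: "st L T M K x y a n \<pi> uu (fv \<psi>)" using stI finite_fv by blast
      show ?thesis using st.part_ii[OF stp _ \<psi>(1) refl \<psi>(2) \<psi>(3) \<psi>(4)] A False by simp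
    qed
  qed
  show ?thesis using part1 part2 by blast
qed


end
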